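(* Let $p\ge1$. For a finite Gaussian mixture $F=\sum_{k=1}^K\alpha_k\mathcal{N}(\mu_k,\Sigma_k)$ on $\mathbb{R}^d$ (with $\alpha_k>0$, $\sum_k\alpha_k=1$, $\mu_k\in\mathbb{R}^d$, $\Sigma_k\in S_d^{++}(\mathbb{R})$), let $G_F$ denote its mixing measure, the finite discrete probability measure on $\mathbb{R}^d\times S_d^{++}(\mathbb{R})$ with $F=f*G_F$ (where $f$ is the Gaussian kernel, i.e. $F=\int\mathcal{N}(\mu,\Sigma)\,dG_F(\mu,\Sigma)$). Then $D(F_1,F_2):=\text{Mix-}SW_p(G_{F_1},G_{F_2})$ is a well-defined metric on the set of finite Gaussian mixtures on $\mathbb{R}^d$.
   Context: $S_d^{++}(\mathbb{R})$ is the set of $d\times d$ real symmetric positive definite matrices, $\log$ the matrix logarithm (via spectral decomposition). Let $\mathbb{S}=\{w\in\mathbb{R}^2:\|w\|_2=1\}$, $\mathbb{S}^{d-1}=\{v\in\mathbb{R}^d:\|v\|_2=1\}$, and let $\mathcal{U}(S_d(\mathbb{R}))$ denote the uniform distribution on the set of real symmetric $d\times d$ matrices $A$ with $\|A\|_F=1$. For $w=(w_1,w_2)\in\mathbb{S}$, $v\in\mathbb{S}^{d-1}$, and such $A$, set $V_w=(w_1v,w_2A)$ and $P_{V_w}(\mu,\Sigma)=w_1\langle\mu,v\rangle+w_2\,\mathrm{Trace}(A\log\Sigma)$. For probability measures $G_1,G_2$ on $\mathbb{R}^d\times S_d^{++}(\mathbb{R})$, $$\text{Mix-}SW_p^p(G_1,G_2)=\mathbb{E}_{(w,v,A)\sim\mathcal{U}(\mathbb{S})\otimes\mathcal{U}(\mathbb{S}^{d-1})\otimes\mathcal{U}(S_d(\mathbb{R}))}\big[W_p^p(P_{V_w}\sharp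 G_1,P_{V_w}\sharp G_2)\big],$$ and $\text{Mix-}SW_p=(\text{Mix-}SW_p^p)^{1/p}$, where $\sharp$ denotes push-forward and $W_p^p(\alpha,\beta)=\inf_{\pi\in\Pi(\alpha,\beta)}\int|x-y|^p\,d\pi(x,y)$ for probability measures on $\mathbb{R}$. *)

theory Defs
  imports "HOL-Analysis.Analysis" "HOL-Probability.Probability"
begin

definition sym_mat :: "real^'n^'n \<Rightarrow> bool" where
  "sym_mat A \<longleftrightarrow> transpose A = A"

definition spd :: "real^'n^'n \<Rightarrow> bool" where
  "spd S \<longleftrightarrow> sym_mat S \<and> (\<forall>x. x \<noteq> 0 \<longrightarrow> x \<bullet> (S *v x) > 0)"

definition diag_mat :: "('n \<Rightarrow> real) \<Rightarrow> real^'n^'n" where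
  "diag_mat d = (\<chi> i j. if i = j then d i else 0)"

definition mat_log :: "real^'n^'n \<Rightarrow> real^'n^'n" where
  "mat_log S = (SOME L. \<exists>U lam. orthogonal_matrix U \<and> (\<forall>i. lam i > 0) \<and>
       S = U ** diag_mat lam ** transpose U \<and>
       L = U ** diag_mat (\<lambda>i. ln (lam i)) ** transpose U)"

definition gauss_pdf :: "real^'n \<Rightarrow> real^'n^'n \<Rightarrow> real^'n \<Rightarrow> real" where
  "gauss_pdf \<mu> S x = (2 * pi) powr (- real CARD('n) / 2) * det S powr (- 1 / 2) *
      exp (- ((x - \<mu>) \<bullet> (matrix_inv S *v (x - \<mu>))) / 2)"

definition mixing_measure :: "((real^'n) \<times> (real^'n^'n)) pmf \<Rightarrow> bool" where
  "mixing_measure G \<longleftrightarrow> finite (set_pmf G) \<and> (\<forall>\<theta>\<in>set_pmf G. spd (snd \<theta>))"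

definition gmm :: "((real^'n) \<times> (real^'n^'n)) pmf \<Rightarrow> (real^'n) measure" where
  "gmm G = density lborel
     (\<lambda>x. ennreal (\<Sum>\<theta>\<in>set_pmf G. pmf G \<theta> * gauss_pdf (fst \<theta>) (snd \<theta>) x))"

text \<open>Uniform (normalised surface) measure on the unit sphere of a Euclidean space:
  radial projection of the uniform distribution on the unit ball.\<close>
definition unif_sphere :: "'a::euclidean_space measure" where
  "unif_sphere = distr (uniform_measure lborel (ball 0 1)) borel (\<lambda>x. x /\<^sub>R norm x)"

definition sym_part :: "real^'n^'n \<Rightarrow> real^'n^'n" where
  "sym_part Z = (1/2) *\<^sub>R (Z + transpose Z)"

text \<open>Uniform distribution on the Frobenius unit sphere of the space of symmetric
  matrices. (The norm on real^n^n is the Frobenius norm.) Obtained by orthogonally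
  projecting the uniform distribution on the unit ball of all matrices onto the
  subspace of symmetric matrices (an O(S_d)-invariant law) and normalising.\<close>
definition unif_sym_sphere :: "(real^'n^'n) measure" where
  "unif_sym_sphere = distr (uniform_measure lborel (ball 0 1)) borel
      (\<lambda>Z. sym_part Z /\<^sub>R norm (sym_part Z))"

definition couplings :: "real measure \<Rightarrow> real measure \<Rightarrow> (real \<times> real) measure set" where
  "couplings \<alpha> \<beta> = {\<pi>. prob_space \<pi> \<and> sets \<pi> = sets borel \<and>
       distr \<pi> borel fst = \<alpha> \<and> distr \<pi> borel snd = \<beta>}"

definition wasserstein_pp :: "real \<Rightarrow> real measure \<Rightarrow> real measure \<Rightarrow> ennreal" where
  "wasserstein_pp p \<alpha> \<beta> =
     (INF \<pi> \<in> couplings \<alpha> \<beta>. \<integral>\<^sup>+ z. ennreal (\<bar>fst z - snd z\<bar> powr p) \<partial>\<pi>)"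

definition proj_V :: "real^2 \<Rightarrow> real^'n \<Rightarrow> real^'n^'n \<Rightarrow> (real^'n) \<times> (real^'n^'n) \<Rightarrow> real" where
  "proj_V w v A \<theta> = w$1 * (fst \<theta> \<bullet> v) + w$2 * trace (A ** mat_log (snd \<theta>))"

definition push :: "real^2 \<Rightarrow> real^'n \<Rightarrow> real^'n^'n \<Rightarrow> ((real^'n) \<times> (real^'n^'n)) pmf \<Rightarrow> real measure" where
  "push w v A G = distr (measure_pmf G) borel (proj_V w v A)"

definition mix_sw_pp :: "real \<Rightarrow> ((real^'n) \<times> (real^'n^'n)) pmf \<Rightarrow> ((real^'n) \<times> (real^'n^'n)) pmf \<Rightarrow> ennreal" where
  "mix_sw_pp p G1 G2 =
     (\<integral>\<^sup>+ u. wasserstein_pp p (push (fst u) (fst (snd u)) (snd (snd u)) G1)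
                               (push (fst u) (fst (snd u)) (snd (snd u)) G2)
        \<partial>(unif_sphere \<Otimes>\<^sub>M (unif_sphere \<Otimes>\<^sub>M (unif_sym_sphere :: (real^'n^'n) measure))))"

definition mix_sw :: "real \<Rightarrow> ((real^'n) \<times> (real^'n^'n)) pmf \<Rightarrow> ((real^'n) \<times> (real^'n^'n)) pmf \<Rightarrow> real" where
  "mix_sw p G1 G2 = enn2real (mix_sw_pp p G1 G2) powr (1 / p)"

end

theory Submission
  imports Defs "HOL-Real_Asymp.Real_Asymp" "HOL-Computational_Algebra.Polynomial"
begin

lemma convex_powr_ineq:
  fixes p x y l :: real
  assumes p: "p \<ge> 1" and x: "x \<ge> 0" and y: "y \<ge> 0" and l: "0 \<le> l" "l \<le> 1"
  shows "(l * x + (1 - l) * y) powr p \<le> l * x powr p + (1 - l) * y powr p"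
proof (cases "x > 0 \<and> y > 0")
  case True
  have "\<forall>x\<in>{0<..}. \<forall>y\<in>{0<..}. \<forall>u\<ge>0. \<forall>v\<ge>0. u + v = 1 \<longrightarrow>
      (u *\<^sub>R x + v *\<^sub>R y) powr p \<le> u * x powr p + v * y powr p"
    using powr_convex[OF p] unfolding convex_on_def by blast
  then have "(l *\<^sub>R x + (1-l) *\<^sub>R y) powr p \<le> l * x powr p + (1-l) * y powr p"
    using True l by auto
  then show ?thesis by simp
next
  case False
  have aux: "(c * z) powr p \<le> c * z powr p" if "0 \<le> c" "c \<le> 1" "z \<ge> 0" for c z :: real
  proof -
    have "(c * z) powr p = c powr p * z powr p" using that by (simp add: powr_mult)
    also have "c powr p \<le> c"
    proof (cases "c = 0")
      case False
      then have "c powr p \<le> c powr 1" using that p by (intro powr_mono') auto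
      then show ?thesis using that by simp
    qed simp
    then have "c powr p * z powr p \<le> c * z powr p" by (intro mult_right_mono) auto
    finally show ?thesis .
  qed
  from False x y have "x = 0 \<or> y = 0" by auto
  then show ?thesis
  proof
    assume "x = 0" then show ?thesis using aux[of "1-l" y] l y by simp
  next
    assume "y = 0" then show ?thesis using aux[of l x] l x by simp
  qed
qed

lemma nn_integral_fin_eq:
  assumes "(X::ennreal) < \<infinity>" shows "X = ennreal (enn2real X)"
  using assms by (simp add: ennreal_enn2real_if less_top)

lemma minkowski_nn:
  fixes f g :: "'a \<Rightarrow> real"
  assumes p: "p \<ge> 1" and f: "f \<in> borel_measurable M" and g: "g \<in> borel_measurable M"
    and f0: "\<And>x. 0 \<le> f x" and g0: "\<And>x. 0 \<le> g x"
    and fin_f: "(\<integral>\<^sup>+x. ennreal (f x powr p) \<partial>M) < \<infinity>"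
    and fin_g: "(\<integral>\<^sup>+x. ennreal (g x powr p) \<partial>M) < \<infinity>"
  shows "(\<integral>\<^sup>+x. ennreal ((f x + g x) powr p) \<partial>M) \<le>
     ennreal ((enn2real (\<integral>\<^sup>+x. ennreal (f x powr p) \<partial>M) powr (1/p) +
               enn2real (\<integral>\<^sup>+x. ennreal (g x powr p) \<partial>M) powr (1/p)) powr p)"
proof -
  define If where "If = enn2real (\<integral>\<^sup>+x. ennreal (f x powr p) \<partial>M)"
  define Ig where "Ig = enn2real (\<integral>\<^sup>+x. ennreal (g x powr p) \<partial>M)"
  define A where "A = If powr (1/p)"
  define B where "B = Ig powr (1/p)"
  have If0: "If \<ge> 0" "Ig \<ge> 0" unfolding If_def Ig_def by auto
  have eqf: "(\<integral>\<^sup>+x. ennreal (f x powr p) \<partial>M) = ennreal If"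
    unfolding If_def using fin_f by (rule nn_integral_fin_eq)
  have eqg: "(\<integral>\<^sup>+x. ennreal (g x powr p) \<partial>M) = ennreal Ig"
    unfolding Ig_def using fin_g by (rule nn_integral_fin_eq)
  have A0: "A \<ge> 0" "B \<ge> 0" unfolding A_def B_def by auto
  have Ap: "A powr p = If" "B powr p = Ig" unfolding A_def B_def using If0 p
    by (auto simp: powr_powr)
  have fm: "(\<lambda>x. ennreal (f x powr p)) \<in> borel_measurable M" using f by measurable
  have gm: "(\<lambda>x. ennreal (g x powr p)) \<in> borel_measurable M" using g by measurable
  show ?thesis
  proof (cases "A = 0 \<or> B = 0")
    case True
    then show ?thesis
    proof
      assume "A = 0"
      then have "If = 0" using Ap p by auto
      then have "(\<integral>\<^sup>+x. ennreal (f x powr p) \<partial>M) = 0" using eqf by simp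
      then have "AE x in M. ennreal (f x powr p) = 0" using fm by (simp add: nn_integral_0_iff_AE)
      then have "AE x in M. f x = 0" by eventually_elim (use f0 in auto)
      then have "(\<integral>\<^sup>+x. ennreal ((f x + g x) powr p) \<partial>M) = (\<integral>\<^sup>+x. ennreal (g x powr p) \<partial>M)"
        by (intro nn_integral_cong_AE) auto
      also have "\<dots> = ennreal ((A + B) powr p)" using eqg Ap `A = 0` by simp
      finally show ?thesis unfolding A_def B_def If_def Ig_def by simp
    next
      assume "B = 0"
      then have "Ig = 0" using Ap p by auto
      then have "(\<integral>\<^sup>+x. ennreal (g x powr p) \<partial>M) = 0" using eqg by simp
      then have "AE x in M. ennreal (g x powr p) = 0" using gm by (simp add: nn_integral_0_iff_AE)
      then have "AE x in M. g x = 0" by eventually_elim (use g0 in auto)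
      then have "(\<integral>\<^sup>+x. ennreal ((f x + g x) powr p) \<partial>M) = (\<integral>\<^sup>+x. ennreal (f x powr p) \<partial>M)"
        by (intro nn_integral_cong_AE) auto
      also have "\<dots> = ennreal ((A + B) powr p)" using eqf Ap `B = 0` by simp
      finally show ?thesis unfolding A_def B_def If_def Ig_def by simp
    qed
  next
    case False
    then have Apos: "A > 0" "B > 0" using A0 by auto
    define l where "l = A / (A + B)"
    have l: "0 \<le> l" "l \<le> 1" "1 - l = B / (A + B)" using Apos unfolding l_def by (auto simp: field_simps)
    define c1 where "c1 = (A + B) powr p * l / A powr p"
    define c2 where "c2 = (A + B) powr p * (1 - l) / B powr p"
    have c0: "c1 \<ge> 0" "c2 \<ge> 0" unfolding c1_def c2_def using l(1,2) Apos
      by (auto intro!: divide_nonneg_nonneg mult_nonneg_nonneg)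
    have pt: "(f x + g x) powr p \<le> c1 * f x powr p + c2 * g x powr p" for x
    proof -
      have e1: "l * (f x / A) = f x / (A + B)" using Apos unfolding l_def by simp
      have e2: "(1 - l) * (g x / B) = g x / (A + B)" using Apos unfolding l(3) by simp
      have "f x + g x = (A + B) * (l * (f x / A) + (1 - l) * (g x / B))"
        unfolding e1 e2 using Apos by (simp add: add_divide_distrib[symmetric])
      then have "(f x + g x) powr p = (A + B) powr p * (l * (f x / A) + (1 - l) * (g x / B)) powr p"
        using Apos f0 g0 l by (simp add: powr_mult)
      also have "\<dots> \<le> (A + B) powr p * (l * (f x / A) powr p + (1 - l) * (g x / B) powr p)"
        by (intro mult_left_mono convex_powr_ineq p l) (use f0 g0 Apos in auto)
      also have "\<dots> = c1 * f x powr p + c2 * g x powr p"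
        unfolding c1_def c2_def using Apos f0 g0 by (simp add: powr_divide field_simps)
      finally show ?thesis .
    qed
    have "(\<integral>\<^sup>+x. ennreal ((f x + g x) powr p) \<partial>M) \<le>
        (\<integral>\<^sup>+x. ennreal c1 * ennreal (f x powr p) + ennreal c2 * ennreal (g x powr p) \<partial>M)"
      by (intro nn_integral_mono) (use pt c0 in \<open>auto simp: ennreal_mult[symmetric] ennreal_plus[symmetric] simp del: ennreal_plus\<close>)
    also have "\<dots> = ennreal c1 * ennreal If + ennreal c2 * ennreal Ig"
      using fm gm by (simp add: nn_integral_add nn_integral_cmult eqf eqg)
    also have "\<dots> = ennreal (c1 * If + c2 * Ig)" using c0 If0 by (simp add: ennreal_mult ennreal_plus)
    also have "c1 * If + c2 * Ig = (A + B) powr p"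
      unfolding c1_def c2_def Ap[symmetric] using Apos l by (simp add: field_simps)
    finally show ?thesis unfolding A_def B_def If_def Ig_def by simp
  qed
qed

lemma sym_inner:
  fixes S :: "real^'n^'n"
  assumes "transpose S = S"
  shows "(S *v x) \<bullet> y = x \<bullet> (S *v y)"
proof -
  have "S *v x = x v* S" using assms by (metis transpose_matrix_vector)
  then show ?thesis by (simp add: dot_lmul_matrix)
qed

lemma eig_step:
  fixes S :: "real^'n^'n" and B :: "(real^'n) set"
  assumes sym: "transpose S = S" and fin: "finite B"
    and unit: "\<And>b. b \<in> B \<Longrightarrow> norm b = 1"
    and eig: "\<And>b. b \<in> B \<Longrightarrow> \<exists>c. S *v b = c *\<^sub>R b"
    and card: "card B < CARD('n)"
  shows "\<exists>e. norm e = 1 \<and> (\<forall>b\<in>B. b \<bullet> e = 0) \<and> (\<exists>c. S *v e = c *\<^sub>R e)"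
proof -
  define K where "K = {x::real^'n. norm x = 1 \<and> (\<forall>b\<in>B. b \<bullet> x = 0)}"
  have "dim (span B) \<le> card B" using fin by (simp add: dim_le_card')
  then have "span B \<noteq> UNIV" using card
    by (metis dim_UNIV dim_span leD DIM_cart DIM_real mult_1_right)
  then obtain a where a: "a \<noteq> 0" "span B \<subseteq> {x. a \<bullet> x = 0}"
    using span_not_univ_subset_hyperplane by blast
  have "a /\<^sub>R norm a \<in> K" using a span_base[of _ B] unfolding K_def
    by (auto simp: inner_commute)
  then have Kne: "K \<noteq> {}" by auto
  have "K = {x. norm x = 1} \<inter> (\<Inter>b\<in>B. {x. b \<bullet> x = 0})" unfolding K_def by auto
  moreover have "closed {x::real^'n. norm x = 1}" by (intro closed_Collect_eq continuous_intros)
  ultimately have "closed K" by (auto intro!: closed_INT closed_hyperplane)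
  moreover have "bounded K" unfolding K_def by (auto simp: bounded_iff)
  ultimately have "compact K" by (simp add: compact_eq_bounded_closed)
  moreover have "continuous_on K (\<lambda>x::real^'n. x \<bullet> (S *v x))" by (intro continuous_intros)
  ultimately obtain e where eK: "e \<in> K" and emax: "\<And>x. x \<in> K \<Longrightarrow> x \<bullet> (S *v x) \<le> e \<bullet> (S *v e)"
    using continuous_attains_sup[of K "\<lambda>x. x \<bullet> (S *v x)"] Kne by blast
  define M where "M = e \<bullet> (S *v e)"
  have gen: "x \<bullet> (S *v x) \<le> M * (x \<bullet> x)" if "\<forall>b\<in>B. b \<bullet> x = 0" for x
  proof (cases "x = 0")
    case False
    have "x /\<^sub>R norm x \<in> K" using that False unfolding K_def by auto
    then have "(x /\<^sub>R norm x) \<bullet> (S *v (x /\<^sub>R norm x)) \<le> M" unfolding M_def by (rule emax)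
    then have "(x \<bullet> (S *v x)) / (norm x)^2 \<le> M"
      by (simp add: matrix_vector_mult_scaleR power2_eq_square divide_inverse mult_ac)
    then show ?thesis using False by (simp add: divide_le_eq dot_square_norm mult.commute)
  qed simp
  define r where "r = S *v e - M *\<^sub>R e"
  have e1: "e \<bullet> e = 1" using eK unfolding K_def by (simp add: dot_square_norm)
  have borth: "\<forall>b\<in>B. b \<bullet> r = 0"
  proof
    fix b assume b: "b \<in> B"
    then obtain c where c: "S *v b = c *\<^sub>R b" using eig by blast
    have be: "b \<bullet> e = 0" using eK b unfolding K_def by auto
    have "b \<bullet> (S *v e) = (S *v b) \<bullet> e" using sym_inner[OF sym] by simp
    then show "b \<bullet> r = 0" unfolding r_def using c be by (simp add: inner_diff_right)
  qed
  have re: "r \<bullet> e = 0" unfolding r_def M_def using e1 by (simp add: inner_diff_left inner_diff_right inner_commute)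
  have "S *v e = r + M *\<^sub>R e" unfolding r_def by simp
  then have rSe: "r \<bullet> (S *v e) = r \<bullet> r" using re
    by (simp add: inner_add_right inner_commute)
  have ineq: "2 * t * (r \<bullet> r) + t^2 * (r \<bullet> (S *v r)) \<le> M * t^2 * (r \<bullet> r)" for t
  proof -
    have "\<forall>b\<in>B. b \<bullet> (e + t *\<^sub>R r) = 0" using eK borth unfolding K_def by (auto simp: inner_add_right)
    then have A: "(e + t *\<^sub>R r) \<bullet> (S *v (e + t *\<^sub>R r)) \<le> M * ((e + t *\<^sub>R r) \<bullet> (e + t *\<^sub>R r))"
      by (rule gen)
    have B: "(e + t *\<^sub>R r) \<bullet> (S *v (e + t *\<^sub>R r)) =
        M + 2 * t * (r \<bullet> (S *v e)) + t^2 * (r \<bullet> (S *v r))"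
    proof -
      have "e \<bullet> (S *v r) = r \<bullet> (S *v e)" using sym_inner[OF sym, of e r] by (simp add: inner_commute)
      then show ?thesis unfolding M_def
        by (simp add: matrix_vector_right_distrib matrix_vector_mult_scaleR inner_add_left inner_add_right
           power2_eq_square algebra_simps)
    qed
    have C: "(e + t *\<^sub>R r) \<bullet> (e + t *\<^sub>R r) = 1 + t^2 * (r \<bullet> r)"
      using e1 re by (simp add: inner_add_left inner_add_right inner_commute power2_eq_square)
    have "M + 2 * t * (r \<bullet> r) + t^2 * (r \<bullet> (S *v r)) \<le> M * (1 + t^2 * (r \<bullet> r))"
      using A unfolding B C rSe .
    then show ?thesis by (simp add: algebra_simps)
  qed
  have "r = 0"
  proof (rule ccontr)
    assume "r \<noteq> 0"
    then have rr: "r \<bullet> r > 0" by simp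
    define K' where "K' = M * (r \<bullet> r) - r \<bullet> (S *v r)"
    define t where "t = (r \<bullet> r) / (\<bar>K'\<bar> + 1)"
    have t: "t > 0" unfolding t_def using rr by auto
    have "2 * t * (r \<bullet> r) \<le> t^2 * K'" using ineq[of t] unfolding K'_def by (simp add: algebra_simps)
    then have "2 * (r \<bullet> r) \<le> t * K'" using t by (simp add: power2_eq_square mult.assoc)
    also have "t * K' \<le> t * \<bar>K'\<bar>" using t by (intro mult_left_mono) auto
    also have "t * \<bar>K'\<bar> < r \<bullet> r" unfolding t_def using rr
      by (simp add: field_simps)
    finally show False using rr by simp
  qed
  then have "S *v e = M *\<^sub>R e" unfolding r_def by simp
  then show ?thesis using eK unfolding K_def by auto
qed

lemma eig_basis_k:
  fixes S :: "real^'n^'n"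
  assumes sym: "transpose S = S"
  shows "k \<le> CARD('n) \<Longrightarrow> \<exists>B. finite B \<and> card B = k \<and> (\<forall>b\<in>B. norm b = 1 \<and> (\<exists>c. S *v b = c *\<^sub>R b))
     \<and> (\<forall>b\<in>B. \<forall>b'\<in>B. b \<noteq> b' \<longrightarrow> b \<bullet> b' = 0)"
proof (induction k)
  case 0
  then show ?case by (intro exI[of _ "{}"]) auto
next
  case (Suc k)
  then obtain B where B: "finite B" "card B = k" "\<forall>b\<in>B. norm b = 1 \<and> (\<exists>c. S *v b = c *\<^sub>R b)"
    "\<forall>b\<in>B. \<forall>b'\<in>B. b \<noteq> b' \<longrightarrow> b \<bullet> b' = 0" by auto
  obtain e where e: "norm e = 1" "\<forall>b\<in>B. b \<bullet> e = 0" "\<exists>c. S *v e = c *\<^sub>R e"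
    using eig_step[OF sym B(1)] B Suc.prems by auto
  have "e \<notin> B"
  proof
    assume "e \<in> B" then have "e \<bullet> e = 0" using e by auto
    then show False using e by simp
  qed
  show ?case
    by (intro exI[of _ "insert e B"]) (use B e `e \<notin> B` in \<open>auto simp: inner_commute\<close>)
qed

lemma spectral:
  fixes S :: "real^'n^'n"
  assumes sym: "transpose S = S"
  shows "\<exists>U lam. orthogonal_matrix U \<and> (\<forall>j. S *v column j U = lam j *\<^sub>R column j U)
     \<and> S = U ** diag_mat lam ** transpose U"
proof -
  obtain B where B: "finite B" "card B = CARD('n)" "\<forall>b\<in>B. norm b = 1 \<and> (\<exists>c. S *v b = c *\<^sub>R b)"
    "\<forall>b\<in>B. \<forall>b'\<in>B. b \<noteq> b' \<longrightarrow> b \<bullet> b' = 0"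
    using eig_basis_k[OF sym, of "CARD('n)"] by auto
  obtain \<phi> :: "'n \<Rightarrow> real^'n" where phi: "bij_betw \<phi> UNIV B"
    using bij_betw_iff_card[of "UNIV::'n set" B] B by auto
  define U :: "real^'n^'n" where "U = (\<chi> i j. \<phi> j $ i)"
  define lam where "lam j = (SOME c. S *v \<phi> j = c *\<^sub>R \<phi> j)" for j
  have phiB: "\<phi> j \<in> B" for j using phi by (auto simp: bij_betw_def)
  have lam: "S *v \<phi> j = lam j *\<^sub>R \<phi> j" for j
    unfolding lam_def by (rule someI_ex) (use B(3) phiB in auto)
  have col: "column j U = \<phi> j" for j unfolding U_def column_def by (simp add: vec_eq_iff)
  have inner_phi: "\<phi> j \<bullet> \<phi> k = (if j = k then 1 else 0)" for j k
  proof (cases "j = k")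
    case True
    then show ?thesis using B(3) phiB[of j] by (simp add: dot_square_norm)
  next
    case False
    then have "\<phi> j \<noteq> \<phi> k" using phi by (auto simp: bij_betw_def inj_def)
    then show ?thesis using B(4) phiB False by auto
  qed
  have "transpose U ** U = mat 1"
    unfolding matrix_matrix_mult_def mat_def transpose_def
    using inner_phi by (simp add: vec_eq_iff U_def inner_vec_def)
  then have orth: "orthogonal_matrix U" by (simp add: orthogonal_matrix)
  have SU: "S ** U = U ** diag_mat lam"
  proof -
    have "(S ** U) $ i $ j = (U ** diag_mat lam) $ i $ j" for i j
    proof -
      have "(S ** U) $ i $ j = (S *v \<phi> j) $ i"
        by (simp add: matrix_matrix_mult_def matrix_vector_mult_def U_def)
      also have "\<dots> = lam j * \<phi> j $ i" using lam by simp
      also have "\<dots> = (U ** diag_mat lam) $ i $ j"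
        by (simp add: matrix_matrix_mult_def diag_mat_def U_def if_distrib if_distribR sum.delta' cong: if_cong)
      finally show ?thesis .
    qed
    then show ?thesis by (simp add: vec_eq_iff)
  qed
  have "U ** diag_mat lam ** transpose U = S ** U ** transpose U" using SU by simp
  also have "\<dots> = S" using orth unfolding orthogonal_matrix_def by (simp add: matrix_mul_assoc[symmetric])
  finally show ?thesis using orth lam col by metis
qed

lemma diag_mul_left: "(diag_mat d ** (C::real^'n^'n)) $ i $ j = d i * C $ i $ j"
  by (simp add: matrix_matrix_mult_def diag_mat_def if_distrib if_distribR sum.delta cong: if_cong)

lemma diag_mul_right: "((C::real^'n^'n) ** diag_mat d) $ i $ j = C $ i $ j * d j"
  by (simp add: matrix_matrix_mult_def diag_mat_def if_distrib if_distribR sum.delta' cong: if_cong)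

lemma transpose_diag: "transpose (diag_mat d) = (diag_mat d :: real^'n^'n)"
  by (simp add: transpose_def diag_mat_def vec_eq_iff)

lemma mat_log_spec:
  fixes S :: "real^'n^'n"
  assumes "spd S"
  shows "\<exists>U lam. orthogonal_matrix U \<and> (\<forall>i. lam i > 0) \<and>
       S = U ** diag_mat lam ** transpose U \<and>
       mat_log S = U ** diag_mat (\<lambda>i. ln (lam i)) ** transpose U"
proof -
  have sym: "transpose S = S" using assms unfolding spd_def sym_mat_def by auto
  obtain U lam where U: "orthogonal_matrix U" "\<forall>j. S *v column j U = lam j *\<^sub>R column j U"
    "S = U ** diag_mat lam ** transpose U" using spectral[OF sym] by blast
  have pos: "lam j > 0" for j
  proof -
    have "(transpose U ** U) $ j $ j = 1" using U(1) unfolding orthogonal_matrix_def by (simp add: mat_def)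
    then have cc: "column j U \<bullet> column j U = 1"
      by (simp add: matrix_matrix_mult_def transpose_def column_def inner_vec_def)
    then have "column j U \<noteq> 0" by auto
    then have "0 < column j U \<bullet> (S *v column j U)" using assms unfolding spd_def by auto
    also have "\<dots> = lam j" using U(2) cc by simp
    finally show ?thesis .
  qed
  have "\<exists>L. \<exists>U lam. orthogonal_matrix U \<and> (\<forall>i. lam i > 0) \<and>
       S = U ** diag_mat lam ** transpose U \<and> L = U ** diag_mat (\<lambda>i. ln (lam i)) ** transpose U"
    using U pos by blast
  then show ?thesis unfolding mat_log_def by (rule someI_ex)
qed

lemma mat_log_sym:
  fixes S :: "real^'n^'n"
  assumes "spd S"
  shows "transpose (mat_log S) = mat_log S"
proof -
  obtain U :: "real^'n^'n" and lam :: "'n \<Rightarrow> real"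
    where "mat_log S = U ** diag_mat (\<lambda>i. ln (lam i)) ** transpose U"
    using mat_log_spec[OF assms] by blast
  then show ?thesis by (simp add: matrix_transpose_mul transpose_diag matrix_mul_assoc)
qed

lemma mat_log_inj:
  fixes S S' :: "real^'n^'n"
  assumes "spd S" "spd S'" "mat_log S = mat_log S'"
  shows "S = S'"
proof -
  obtain U :: "real^'n^'n" and lam :: "'n \<Rightarrow> real" where U: "orthogonal_matrix U" "\<forall>i. lam i > 0"
       "S = U ** diag_mat lam ** transpose U"
       "mat_log S = U ** diag_mat (\<lambda>i. ln (lam i)) ** transpose U"
    using mat_log_spec[OF assms(1)] by blast
  obtain V :: "real^'n^'n" and mu :: "'n \<Rightarrow> real" where V: "orthogonal_matrix V" "\<forall>i. mu i > 0"
       "S' = V ** diag_mat mu ** transpose V"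
       "mat_log S' = V ** diag_mat (\<lambda>i. ln (mu i)) ** transpose V"
    using mat_log_spec[OF assms(2)] by blast
  have UU: "transpose U ** U = mat 1" "U ** transpose U = mat 1" using U(1) unfolding orthogonal_matrix_def by auto
  have VV: "transpose V ** V = mat 1" "V ** transpose V = mat 1" using V(1) unfolding orthogonal_matrix_def by auto
  define C where "C = transpose U ** V"
  have "transpose U ** mat_log S ** V = diag_mat (\<lambda>i. ln (lam i)) ** C"
    unfolding U(4) C_def by (simp add: matrix_mul_assoc[symmetric]) (simp add: matrix_mul_assoc UU)
  moreover have "transpose U ** mat_log S' ** V = C ** diag_mat (\<lambda>i. ln (mu i))"
    unfolding V(4) C_def by (simp add: matrix_mul_assoc[symmetric] VV)
  ultimately have eq: "diag_mat (\<lambda>i. ln (lam i)) ** C = C ** diag_mat (\<lambda>i. ln (mu i))"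
    using assms(3) by simp
  have DC: "diag_mat lam ** C = C ** diag_mat mu"
  proof -
    have "lam i * C $ i $ j = C $ i $ j * mu j" for i j
    proof -
      have "ln (lam i) * C $ i $ j = C $ i $ j * ln (mu j)"
        using arg_cong[OF eq, of "\<lambda>M. M $ i $ j"] by (simp add: diag_mul_left diag_mul_right)
      then have "C $ i $ j = 0 \<or> ln (lam i) = ln (mu j)" by (auto simp: mult.commute)
      then have "C $ i $ j = 0 \<or> lam i = mu j" using U(2) V(2) by auto
      then show ?thesis by auto
    qed
    then show ?thesis by (simp add: vec_eq_iff diag_mul_left diag_mul_right)
  qed
  have "S ** V = U ** (diag_mat lam ** C)"
    unfolding U(3) C_def by (simp add: matrix_mul_assoc)
  also have "\<dots> = U ** C ** diag_mat mu" by (simp add: DC matrix_mul_assoc)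
  also have "\<dots> = V ** diag_mat mu" unfolding C_def by (simp add: matrix_mul_assoc UU)
  also have "\<dots> = S' ** V" unfolding V(3) by (simp add: matrix_mul_assoc[symmetric] VV)
  finally have "S ** V ** transpose V = S' ** V ** transpose V" by simp
  then show ?thesis by (simp add: matrix_mul_assoc[symmetric] VV)
qed

lemma exp_quad_tendsto0:
  fixes a b :: real
  assumes "a < 0 \<or> (a = 0 \<and> b < 0)"
  shows "((\<lambda>t. exp (a * t^2 + b * t)) \<longlongrightarrow> 0) at_top"
  using assms
proof
  assume "a < 0" then show ?thesis by real_asymp
next
  assume "a = 0 \<and> b < 0"
  then show ?thesis by simp real_asymp
qed

lemma expsum_zero:
  fixes a b d :: "'a \<Rightarrow> real"
  assumes fin: "finite T" and inj: "inj_on (\<lambda>x. (a x, b x)) T"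
  shows "(\<forall>t. (\<Sum>x\<in>T. d x * exp (a x * t^2 + b x * t)) = 0) \<Longrightarrow> (\<forall>x\<in>T. d x = 0)"
  using fin
proof (induction T rule: finite_remove_induct)
  case empty
  then show ?case by simp
next
  case (remove A)
  have injA: "inj_on (\<lambda>x. (a x, b x)) A" using inj_on_subset[OF inj remove.hyps(3)] .
  define am where "am = Max (a ` A)"
  define A1 where "A1 = {x\<in>A. a x = am}"
  have "am \<in> a ` A" unfolding am_def using remove.hyps by auto
  then have A1ne: "A1 \<noteq> {}" unfolding A1_def by auto
  have A1fin: "finite A1" unfolding A1_def using remove.hyps by auto
  define bm where "bm = Max (b ` A1)"
  have "bm \<in> b ` A1" unfolding bm_def using A1ne A1fin by auto
  then obtain x0 where x0: "x0 \<in> A1" "b x0 = bm" by auto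
  have x0A: "x0 \<in> A" "a x0 = am" using x0 unfolding A1_def by auto
  have other: "a x - a x0 < 0 \<or> (a x - a x0 = 0 \<and> b x - b x0 < 0)" if "x \<in> A" "x \<noteq> x0" for x
  proof -
    have "a x \<le> am" unfolding am_def using remove.hyps that by auto
    moreover have "a x = am \<Longrightarrow> b x < bm"
    proof -
      assume ax: "a x = am"
      then have "x \<in> A1" using that unfolding A1_def by auto
      then have "b x \<le> bm" unfolding bm_def using A1fin by auto
      moreover have "b x \<noteq> bm" using injA that x0A x0 ax unfolding inj_on_def by auto
      ultimately show "b x < bm" by auto
    qed
    ultimately show ?thesis using x0A x0 by auto
  qed
  have lim: "((\<lambda>t. \<Sum>x\<in>A - {x0}. d x * exp ((a x - a x0) * t^2 + (b x - b x0) * t)) \<longlongrightarrow> 0) at_top"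
  proof -
    have "((\<lambda>t. \<Sum>x\<in>A - {x0}. d x * exp ((a x - a x0) * t^2 + (b x - b x0) * t)) \<longlongrightarrow> (\<Sum>x\<in>A - {x0}. d x * 0)) at_top"
      by (intro tendsto_sum tendsto_mult tendsto_const exp_quad_tendsto0 other) auto
    then show ?thesis by simp
  qed
  have eq: "d x0 + (\<Sum>x\<in>A - {x0}. d x * exp ((a x - a x0) * t^2 + (b x - b x0) * t)) = 0" for t
  proof -
    have "(\<Sum>x\<in>A. d x * exp (a x * t^2 + b x * t)) = 0" using remove.prems by blast
    then have "(\<Sum>x\<in>A. d x * exp (a x * t^2 + b x * t)) / exp (a x0 * t^2 + b x0 * t) = 0" by simp
    moreover have "(\<Sum>x\<in>A. d x * exp (a x * t^2 + b x * t)) / exp (a x0 * t^2 + b x0 * t) =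
        (\<Sum>x\<in>A. d x * exp ((a x - a x0) * t^2 + (b x - b x0) * t))"
      unfolding sum_divide_distrib
    proof (rule sum.cong[OF refl])
      fix x
      have "(a x - a x0) * t^2 + (b x - b x0) * t = (a x * t^2 + b x * t) - (a x0 * t^2 + b x0 * t)"
        by (simp add: left_diff_distrib)
      then show "d x * exp (a x * t^2 + b x * t) / exp (a x0 * t^2 + b x0 * t) =
          d x * exp ((a x - a x0) * t^2 + (b x - b x0) * t)"
        by (simp only: exp_diff) simp
    qed
    ultimately have "(\<Sum>x\<in>A. d x * exp ((a x - a x0) * t^2 + (b x - b x0) * t)) = 0" by simp
    then show ?thesis using remove.hyps x0A
      by (simp add: sum.remove[of A x0])
  qed
  have "((\<lambda>t. d x0 + (\<Sum>x\<in>A - {x0}. d x * exp ((a x - a x0) * t^2 + (b x - b x0) * t))) \<longlongrightarrow> d x0 + 0) at_top"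
    by (intro tendsto_add tendsto_const lim)
  then have "((\<lambda>t::real. 0::real) \<longlongrightarrow> d x0) at_top" using eq by simp
  then have d0: "d x0 = 0" using tendsto_const_iff[of "at_top::real filter" 0 "d x0"] by simp
  have "\<forall>t. (\<Sum>x\<in>A - {x0}. d x * exp (a x * t^2 + b x * t)) = 0"
  proof
    fix t
    have "(\<Sum>x\<in>A. d x * exp (a x * t^2 + b x * t)) = 0" using remove.prems by blast
    then show "(\<Sum>x\<in>A - {x0}. d x * exp (a x * t^2 + b x * t)) = 0"
      using remove.hyps x0A d0 by (simp add: sum.remove[of A x0])
  qed
  then have "\<forall>x\<in>A - {x0}. d x = 0" using remove.IH[OF x0A(1)] by blast
  then show ?case using d0 by auto
qed

lemma generic_point:
  fixes F :: "('a::real_vector \<Rightarrow> real) set"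
  assumes "finite F" and "\<forall>h\<in>F. \<exists>z. h z \<noteq> 0"
    and "\<forall>h\<in>F. \<forall>z0 z1. \<exists>B C. (\<forall>s. h (z0 + s *\<^sub>R z1) = h z0 + B * s + C * s^2) \<and> (h z1 \<noteq> 0 \<longrightarrow> B \<noteq> 0 \<or> C \<noteq> 0)"
  shows "\<exists>z. \<forall>h\<in>F. h z \<noteq> 0"
  using assms
proof (induction F rule: finite_induct)
  case empty
  then show ?case by simp
next
  case (insert h F)
  have "\<exists>z. \<forall>g\<in>F. g z \<noteq> 0" using insert.prems by (intro insert.IH) auto
  then obtain z0 where z0: "\<forall>g\<in>F. g z0 \<noteq> 0" by blast
  have "\<exists>z. h z \<noteq> 0" using insert.prems(1) by simp
  then obtain z1 where z1: "h z1 \<noteq> 0" by blast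
  have rootsfin: "finite {s. g (z0 + s *\<^sub>R z1) = 0}" if "g \<in> insert h F" for g
  proof -
    have X: "\<forall>z0 z1. \<exists>B C. (\<forall>s. g (z0 + s *\<^sub>R z1) = g z0 + B * s + C * s^2) \<and> (g z1 \<noteq> 0 \<longrightarrow> B \<noteq> 0 \<or> C \<noteq> 0)"
      using bspec[OF insert.prems(2) that] .
    from X[rule_format, of z0 z1] obtain B C where BC: "\<forall>s. g (z0 + s *\<^sub>R z1) = g z0 + B * s + C * s^2" "g z1 \<noteq> 0 \<longrightarrow> B \<noteq> 0 \<or> C \<noteq> 0"
      by blast
    have "[:g z0, B, C:] \<noteq> 0"
    proof (cases "g = h")
      case True
      then show ?thesis using BC z1 by auto
    next
      case False
      then have "g z0 \<noteq> 0" using that z0 by auto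
      then show ?thesis by auto
    qed
    then have "finite {s. poly [:g z0, B, C:] s = 0}" by (rule poly_roots_finite)
    moreover have "g (z0 + s *\<^sub>R z1) = poly [:g z0, B, C:] s" for s
    proof -
      have "poly [:g z0, B, C:] s = g z0 + s * (B + s * C)" by simp
      also have "\<dots> = g z0 + B * s + C * s^2" by (simp add: power2_eq_square distrib_left mult.commute mult.left_commute)
      finally show ?thesis using BC(1) by simp
    qed
    then have "{s. g (z0 + s *\<^sub>R z1) = 0} = {s. poly [:g z0, B, C:] s = 0}" by simp
    ultimately show ?thesis by simp
  qed
  have "finite (\<Union>g\<in>insert h F. {s. g (z0 + s *\<^sub>R z1) = 0})"
    using insert.hyps rootsfin by auto
  then obtain s :: real where s: "s \<notin> (\<Union>g\<in>insert h F. {s. g (z0 + s *\<^sub>R z1) = 0})"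
    using ex_new_if_finite[OF infinite_UNIV_char_0, of "\<Union>g\<in>insert h F. {s. g (z0 + s *\<^sub>R z1) = 0}"] by auto
  then have "\<forall>g\<in>insert h F. g (z0 + s *\<^sub>R z1) \<noteq> 0" by blast
  then show ?case by blast
qed

lemma spd_facts:
  fixes S :: "real^'n^'n"
  assumes "spd S"
  shows "transpose S = S" "invertible S" "S ** matrix_inv S = mat 1" "matrix_inv S ** S = mat 1"
    "transpose (matrix_inv S) = matrix_inv S" "det S \<noteq> 0"
proof -
  show sym: "transpose S = S" using assms unfolding spd_def sym_mat_def by auto
  have "\<forall>x. S *v x = 0 \<longrightarrow> x = 0"
  proof (intro allI impI)
    fix x assume "S *v x = 0"
    then have "x \<bullet> (S *v x) = 0" by simp
    then show "x = 0" using assms unfolding spd_def by force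
  qed
  then show inv: "invertible S" using matrix_left_invertible_ker invertible_left_inverse by blast
  then have both: "S ** matrix_inv S = mat 1 \<and> matrix_inv S ** S = mat 1"
    unfolding invertible_def matrix_inv_def by (rule someI_ex)
  then show "S ** matrix_inv S = mat 1" "matrix_inv S ** S = mat 1" by auto
  show "det S \<noteq> 0" using inv invertible_det_nz by blast
  have "transpose (matrix_inv S) ** S = mat 1"
    using arg_cong[OF conjunct1[OF both], of transpose] sym by (simp add: matrix_transpose_mul)
  then have "transpose (matrix_inv S) = transpose (matrix_inv S) ** (S ** matrix_inv S)" using both by simp
  also have "\<dots> = matrix_inv S" by (simp add: matrix_mul_assoc \<open>transpose (matrix_inv S) ** S = mat 1\<close>)
  finally show "transpose (matrix_inv S) = matrix_inv S" .
qed

lemma matrix_inv_inj_spd: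
  fixes S S' :: "real^'n^'n"
  assumes "spd S" "spd S'" "matrix_inv S = matrix_inv S'"
  shows "S = S'"
proof -
  have "S = S ** (matrix_inv S' ** S')" using spd_facts(4)[OF assms(2)] by simp
  also have "\<dots> = (S ** matrix_inv S) ** S'" using assms(3) by (simp add: matrix_mul_assoc)
  also have "\<dots> = S'" using spd_facts(3)[OF assms(1)] by simp
  finally show ?thesis .
qed

lemma quad_zero_sym:
  fixes M :: "real^'n^'n"
  assumes sym: "transpose M = M" and z: "\<forall>z. z \<bullet> (M *v z) = 0"
  shows "M = 0"
proof -
  have "M *v y = 0" for y
  proof -
    let ?x = "M *v y"
    have "(?x + y) \<bullet> (M *v (?x + y)) = 0" using z by blast
    then have "?x \<bullet> (M *v y) + y \<bullet> (M *v ?x) = 0"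
      using z by (simp add: matrix_vector_right_distrib inner_add_left inner_add_right)
    moreover have "y \<bullet> (M *v ?x) = ?x \<bullet> (M *v y)" using sym_inner[OF sym, of y ?x] by (simp add: inner_commute)
    ultimately have "?x \<bullet> ?x = 0" by simp
    then show ?thesis by simp
  qed
  then show ?thesis by (simp add: matrix_eq)
qed

lemma quad_expand:
  fixes M :: "real^'n^'n"
  shows "(z0 + s *\<^sub>R z1) \<bullet> (M *v (z0 + s *\<^sub>R z1)) =
    z0 \<bullet> (M *v z0) + (z0 \<bullet> (M *v z1) + z1 \<bullet> (M *v z0)) * s + (z1 \<bullet> (M *v z1)) * s^2"
  by (simp add: matrix_vector_right_distrib matrix_vector_mult_scaleR inner_add_left inner_add_right
      power2_eq_square algebra_simps)

lemma gauss_line: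
  fixes S :: "real^'n^'n"
  defines "P \<equiv> matrix_inv S"
  shows "gauss_pdf \<mu> S (t *\<^sub>R z) =
    ((2 * pi) powr (- real CARD('n) / 2) * det S powr (- 1 / 2) * exp (- (\<mu> \<bullet> (P *v \<mu>)) / 2)) *
    exp ((- (z \<bullet> (P *v z)) / 2) * t^2 + ((z \<bullet> (P *v \<mu>) + \<mu> \<bullet> (P *v z)) / 2) * t)"
proof -
  have "(t *\<^sub>R z - \<mu>) \<bullet> (P *v (t *\<^sub>R z - \<mu>)) =
     t^2 * (z \<bullet> (P *v z)) - t * (z \<bullet> (P *v \<mu>) + \<mu> \<bullet> (P *v z)) + \<mu> \<bullet> (P *v \<mu>)"
    by (simp add: matrix_vector_mult_diff_distrib matrix_vector_mult_scaleR inner_diff_left inner_diff_right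
      power2_eq_square algebra_simps)
  then have E: "- ((t *\<^sub>R z - \<mu>) \<bullet> (P *v (t *\<^sub>R z - \<mu>))) / 2 =
     - (\<mu> \<bullet> (P *v \<mu>)) / 2 + ((- (z \<bullet> (P *v z)) / 2) * t^2 + ((z \<bullet> (P *v \<mu>) + \<mu> \<bullet> (P *v z)) / 2) * t)"
    by (simp add: field_simps)
  show ?thesis unfolding gauss_pdf_def P_def[symmetric] E exp_add by (simp only: mult.assoc)
qed

lemma gauss_lin_indep:
  fixes T :: "((real^'n) \<times> (real^'n^'n)) set" and c :: "(real^'n) \<times> (real^'n^'n) \<Rightarrow> real"
  assumes fin: "finite T" and spdT: "\<forall>\<theta>\<in>T. spd (snd \<theta>)"
    and zero: "\<forall>x. (\<Sum>\<theta>\<in>T. c \<theta> * gauss_pdf (fst \<theta>) (snd \<theta>) x) = 0"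
  shows "\<forall>\<theta>\<in>T. c \<theta> = 0"
proof -
  define P where "P \<theta> = matrix_inv (snd \<theta>)" for \<theta> :: "(real^'n) \<times> (real^'n^'n)"
  have Psym: "transpose (P \<theta>) = P \<theta>" if "\<theta> \<in> T" for \<theta>
    unfolding P_def using spd_facts(5) spdT that by blast
  define hf where "hf \<theta> \<theta>' = (if snd \<theta> \<noteq> snd \<theta>' then (\<lambda>z. z \<bullet> ((P \<theta> - P \<theta>') *v z))
      else (\<lambda>z. z \<bullet> (P \<theta> *v (fst \<theta> - fst \<theta>'))))" for \<theta> \<theta>' :: "(real^'n) \<times> (real^'n^'n)"
  define F where "F = (\<lambda>p. hf (fst p) (snd p)) ` {p \<in> T \<times> T. fst p \<noteq> snd p}"
  have finF: "finite F" unfolding F_def using fin by auto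
  have nz: "\<exists>z. hf \<theta> \<theta>' z \<noteq> 0" if th: "\<theta> \<in> T" "\<theta>' \<in> T" "\<theta> \<noteq> \<theta>'" for \<theta> \<theta>'
  proof (cases "snd \<theta> \<noteq> snd \<theta>'")
    case True
    have "P \<theta> \<noteq> P \<theta>'" using matrix_inv_inj_spd spdT th True unfolding P_def by blast
    then have Mnz: "P \<theta> - P \<theta>' \<noteq> 0" by simp
    have "transpose (P \<theta> - P \<theta>') = P \<theta> - P \<theta>'"
      using Psym[OF th(1)] Psym[OF th(2)]
      by (simp add: transpose_def vec_eq_iff)
    then have "\<not> (\<forall>z. z \<bullet> ((P \<theta> - P \<theta>') *v z) = 0)" using quad_zero_sym Mnz by blast
    then show ?thesis using True unfolding hf_def by auto
  next
    case False
    then have mu: "fst \<theta> - fst \<theta>' \<noteq> 0" using th by (metis prod.expand right_minus_eq)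
    have "snd \<theta> ** P \<theta> = mat 1" unfolding P_def using spd_facts(3) spdT th by blast
    then have "snd \<theta> *v (P \<theta> *v (fst \<theta> - fst \<theta>')) = fst \<theta> - fst \<theta>'"
      by (simp add: matrix_vector_mul_assoc)
    then have w: "P \<theta> *v (fst \<theta> - fst \<theta>') \<noteq> 0" using mu by auto
    show ?thesis using False w unfolding hf_def
      by (intro exI[of _ "P \<theta> *v (fst \<theta> - fst \<theta>')"]) auto
  qed
  have polyl: "\<exists>B C. (\<forall>s. hf \<theta> \<theta>' (z0 + s *\<^sub>R z1) = hf \<theta> \<theta>' z0 + B * s + C * s^2) \<and>
        (hf \<theta> \<theta>' z1 \<noteq> 0 \<longrightarrow> B \<noteq> 0 \<or> C \<noteq> 0)" for \<theta> \<theta>' z0 z1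
  proof (cases "snd \<theta> \<noteq> snd \<theta>'")
    case True
    let ?M = "P \<theta> - P \<theta>'"
    show ?thesis using True unfolding hf_def
      by (intro exI[of _ "z0 \<bullet> (?M *v z1) + z1 \<bullet> (?M *v z0)"] exI[of _ "z1 \<bullet> (?M *v z1)"])
         (simp add: quad_expand)
  next
    case False
    show ?thesis using False unfolding hf_def
      by (intro exI[of _ "z1 \<bullet> (P \<theta> *v (fst \<theta> - fst \<theta>'))"] exI[of _ 0])
         (simp add: inner_add_left algebra_simps)
  qed
  have A2: "\<forall>h\<in>F. \<exists>z. h z \<noteq> 0" unfolding F_def using nz by auto
  have A3: "\<forall>h\<in>F. \<forall>z0 z1. \<exists>B C. (\<forall>s. h (z0 + s *\<^sub>R z1) = h z0 + B * s + C * s^2) \<and> (h z1 \<noteq> 0 \<longrightarrow> B \<noteq> 0 \<or> C \<noteq> 0)"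
    unfolding F_def using polyl by blast
  obtain z where z: "\<forall>h\<in>F. h z \<noteq> 0"
    using generic_point[OF finF A2 A3] by blast
  have hz: "hf \<theta> \<theta>' z \<noteq> 0" if "\<theta> \<in> T" "\<theta>' \<in> T" "\<theta> \<noteq> \<theta>'" for \<theta> \<theta>'
  proof -
    have "hf \<theta> \<theta>' \<in> F" unfolding F_def using that by (intro image_eqI[of _ _ "(\<theta>, \<theta>')"]) auto
    then show ?thesis using z by blast
  qed
  define a where "a \<theta> = - (z \<bullet> (P \<theta> *v z)) / 2" for \<theta>
  define b where "b \<theta> = (z \<bullet> (P \<theta> *v fst \<theta>) + fst \<theta> \<bullet> (P \<theta> *v z)) / 2" for \<theta>
  define K where "K \<theta> = (2 * pi) powr (- real CARD('n) / 2) * det (snd \<theta>) powr (- 1 / 2) *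
      exp (- (fst \<theta> \<bullet> (P \<theta> *v fst \<theta>)) / 2)" for \<theta>
  have Knz: "K \<theta> \<noteq> 0" if "\<theta> \<in> T" for \<theta>
    using spd_facts(6) spdT that unfolding K_def by (auto simp: powr_eq_0_iff)
  have sumz: "\<forall>t. (\<Sum>\<theta>\<in>T. (c \<theta> * K \<theta>) * exp (a \<theta> * t^2 + b \<theta> * t)) = 0"
  proof
    fix t
    have "(\<Sum>\<theta>\<in>T. c \<theta> * gauss_pdf (fst \<theta>) (snd \<theta>) (t *\<^sub>R z)) = 0" using zero by blast
    moreover have "gauss_pdf (fst \<theta>) (snd \<theta>) (t *\<^sub>R z) = K \<theta> * exp (a \<theta> * t^2 + b \<theta> * t)" for \<theta>
      unfolding K_def a_def b_def P_def by (rule gauss_line)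
    ultimately show "(\<Sum>\<theta>\<in>T. (c \<theta> * K \<theta>) * exp (a \<theta> * t^2 + b \<theta> * t)) = 0"
      by (simp add: mult.assoc)
  qed
  have inj: "inj_on (\<lambda>\<theta>. (a \<theta>, b \<theta>)) T"
  proof (rule inj_onI, rule ccontr)
    fix \<theta> \<theta>' assume th: "\<theta> \<in> T" "\<theta>' \<in> T" "(a \<theta>, b \<theta>) = (a \<theta>', b \<theta>')" "\<theta> \<noteq> \<theta>'"
    have h: "hf \<theta> \<theta>' z \<noteq> 0" using hz th by blast
    show False
    proof (cases "snd \<theta> \<noteq> snd \<theta>'")
      case True
      have "a \<theta> - a \<theta>' = - (z \<bullet> ((P \<theta> - P \<theta>') *v z)) / 2"
        unfolding a_def by (simp add: matrix_vector_mult_diff_rdistrib inner_diff_right field_simps)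
      then show False using th h True unfolding hf_def by auto
    next
      case False
      then have PP: "P \<theta>' = P \<theta>" unfolding P_def by simp
      have "(fst \<theta> - fst \<theta>') \<bullet> (P \<theta> *v z) = z \<bullet> (P \<theta> *v (fst \<theta> - fst \<theta>'))"
        using sym_inner[OF Psym[OF th(1)], of "fst \<theta> - fst \<theta>'" z] by (simp add: inner_commute)
      then have "b \<theta> - b \<theta>' = z \<bullet> (P \<theta> *v (fst \<theta> - fst \<theta>'))"
        unfolding b_def PP
        by (simp add: matrix_vector_mult_diff_distrib inner_diff_right inner_diff_left field_simps)
      then show False using th h False unfolding hf_def by auto
    qed
  qed
  have "\<forall>\<theta>\<in>T. c \<theta> * K \<theta> = 0" using expsum_zero[OF fin inj sumz] .
  then show ?thesis using Knz by auto
qed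

lemma continuous_on_mvmult[continuous_intros]:
  "continuous_on s f \<Longrightarrow> continuous_on s (\<lambda>x. (A::real^'m^'k) *v f x)"
  using continuous_on_compose2[OF matrix_vector_mult_linear_continuous_on[of UNIV A], of s f] by auto

lemma gauss_pdf_nonneg: "0 \<le> gauss_pdf \<mu> S x"
  unfolding gauss_pdf_def by auto

lemma gauss_pdf_cont: "continuous_on UNIV (gauss_pdf \<mu> S)"
  unfolding gauss_pdf_def by (intro continuous_intros) auto

lemma ae_cont_eq:
  fixes f g :: "'a::euclidean_space \<Rightarrow> real"
  assumes f: "continuous_on UNIV f" and g: "continuous_on UNIV g" and ae: "AE x in lborel. f x = g x"
  shows "f x = g x"
proof (rule ccontr)
  assume ne: "f x \<noteq> g x"
  have op: "open {x. f x \<noteq> g x}" using f g by (intro open_Collect_neq) auto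
  have xin: "x \<in> {x. f x \<noteq> g x}" using ne by simp
  obtain e where e: "e > 0" "ball x e \<subseteq> {x. f x \<noteq> g x}"
    using open_contains_ball[THEN iffD1, OF op] xin by blast
  from ae obtain N where N: "{x \<in> space lborel. \<not> f x = g x} \<subseteq> N" "emeasure lborel N = 0" "N \<in> sets lborel"
    by (rule AE_E)
  have "ball x e \<subseteq> N" using e N by auto
  then have "emeasure lborel (ball x e) \<le> emeasure lborel N" using N(3) by (intro emeasure_mono) auto
  then have "emeasure lborel (ball x e) = 0" using N by simp
  moreover have "emeasure lborel (ball x e) > 0"
    using e by (simp add: emeasure_ball unit_ball_vol_pos)
  ultimately show False by simp
qed

definition dens :: "((real^'n) \<times> (real^'n^'n)) pmf \<Rightarrow> real^'n \<Rightarrow> real" where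
  "dens G x = (\<Sum>\<theta>\<in>set_pmf G. pmf G \<theta> * gauss_pdf (fst \<theta>) (snd \<theta>) x)"

lemma dens_cont: "continuous_on UNIV (dens G)"
  unfolding dens_def by (intro continuous_on_sum continuous_on_mult continuous_on_const gauss_pdf_cont)

lemma dens_nonneg: "0 \<le> dens G x"
  unfolding dens_def by (intro sum_nonneg mult_nonneg_nonneg gauss_pdf_nonneg) auto

lemma dens_meas: "(\<lambda>x. ennreal (dens G x)) \<in> borel_measurable lborel"
proof -
  have "dens G \<in> borel_measurable borel" using dens_cont by (rule borel_measurable_continuous_onI)
  then show ?thesis by simp
qed

lemma gmm_inj:
  assumes m1: "mixing_measure G1" and m2: "mixing_measure G2" and eq: "gmm G1 = gmm G2"
  shows "G1 = G2"
proof -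
  have "density lborel (\<lambda>x. ennreal (dens G1 x)) = density lborel (\<lambda>x. ennreal (dens G2 x))"
    using eq unfolding gmm_def dens_def .
  then have "AE x in lborel. ennreal (dens G1 x) = ennreal (dens G2 x)"
    using sigma_finite_measure.density_unique_iff[OF lborel.sigma_finite_measure_axioms dens_meas dens_meas] by blast
  then have "AE x in lborel. dens G1 x = dens G2 x"
    by eventually_elim (simp add: dens_nonneg)
  then have deq: "dens G1 x = dens G2 x" for x by (intro ae_cont_eq dens_cont)
  define T where "T = set_pmf G1 \<union> set_pmf G2"
  have finT: "finite T" using m1 m2 unfolding T_def mixing_measure_def by auto
  have spdT: "\<forall>\<theta>\<in>T. spd (snd \<theta>)" using m1 m2 unfolding T_def mixing_measure_def by auto
  have ext: "dens G x = (\<Sum>\<theta>\<in>T. pmf G \<theta> * gauss_pdf (fst \<theta>) (snd \<theta>) x)" if "set_pmf G \<subseteq> T" for G x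
    unfolding dens_def using that finT
    by (intro sum.mono_neutral_left) (simp_all add: set_pmf_iff)
  have "\<forall>x. (\<Sum>\<theta>\<in>T. (pmf G1 \<theta> - pmf G2 \<theta>) * gauss_pdf (fst \<theta>) (snd \<theta>) x) = 0"
  proof
    fix x
    have "dens G1 x - dens G2 x = 0" using deq by simp
    then show "(\<Sum>\<theta>\<in>T. (pmf G1 \<theta> - pmf G2 \<theta>) * gauss_pdf (fst \<theta>) (snd \<theta>) x) = 0"
      using ext[of G1 x] ext[of G2 x] unfolding T_def
      by (simp add: left_diff_distrib sum_subtractf)
  qed
  then have "\<forall>\<theta>\<in>T. pmf G1 \<theta> - pmf G2 \<theta> = 0" by (rule gauss_lin_indep[OF finT spdT])
  then have "pmf G1 \<theta> = pmf G2 \<theta>" for \<theta>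
  proof (cases "\<theta> \<in> T")
    case False
    then have "\<theta> \<notin> set_pmf G1" "\<theta> \<notin> set_pmf G2" unfolding T_def by auto
    then show ?thesis by (simp add: set_pmf_iff)
  qed simp
  then show ?thesis by (rule pmf_eqI)
qed

definition cpl :: "'a pmf \<Rightarrow> 'a pmf \<Rightarrow> ('a \<times> 'a) pmf set" where
  "cpl G1 G2 = {\<gamma>. map_pmf fst \<gamma> = G1 \<and> map_pmf snd \<gamma> = G2}"

definition costp :: "real \<Rightarrow> ('a \<Rightarrow> real) \<Rightarrow> ('a \<times> 'a) pmf \<Rightarrow> ennreal" where
  "costp p f \<gamma> = (\<integral>\<^sup>+ z. ennreal (\<bar>f (fst z) - f (snd z)\<bar> powr p) \<partial>measure_pmf \<gamma>)"

definition Wl :: "real \<Rightarrow> ('a \<Rightarrow> real) \<Rightarrow> 'a pmf \<Rightarrow> 'a pmf \<Rightarrow> ennreal" where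
  "Wl p f G1 G2 = (INF \<gamma> \<in> cpl G1 G2. costp p f \<gamma>)"

lemma fst_borel[measurable]: "(fst :: real \<times> real \<Rightarrow> real) \<in> borel_measurable borel"
  by (intro borel_measurable_continuous_onI continuous_intros)

lemma snd_borel[measurable]: "(snd :: real \<times> real \<Rightarrow> real) \<in> borel_measurable borel"
  by (intro borel_measurable_continuous_onI continuous_intros)

lemma cost_meas[measurable]: "(\<lambda>z::real\<times>real. ennreal (\<bar>fst z - snd z\<bar> powr p)) \<in> borel_measurable borel"
proof -
  have "(\<lambda>z::real\<times>real. \<bar>fst z - snd z\<bar> powr p) \<in> borel_measurable borel"
    by (intro measurable_abs_powr borel_measurable_diff fst_borel snd_borel)
  then show ?thesis by (rule measurable_compose) simp
qed

lemma distr_pmf_comp: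
  "distr (measure_pmf G) borel (\<lambda>x. g (h x)) = distr (measure_pmf (map_pmf h G)) borel g"
  unfolding map_pmf_rep_eq by (subst distr_distr) (auto simp: comp_def)

lemma couplings_sets: "\<pi> \<in> couplings \<alpha> \<beta> \<Longrightarrow> sets \<pi> = sets borel"
  unfolding couplings_def by auto

lemma meas_pi: "sets \<pi> = sets borel \<Longrightarrow> (g :: real \<times> real \<Rightarrow> 'b::topological_space) \<in> borel_measurable borel \<Longrightarrow> g \<in> borel_measurable \<pi>"
  using measurable_cong_sets[of \<pi> borel borel borel] by auto

lemma W_le_cost:
  assumes "\<gamma> \<in> cpl G1 G2"
  shows "wasserstein_pp p (distr (measure_pmf G1) borel f) (distr (measure_pmf G2) borel f) \<le> costp p f \<gamma>"
proof -
  define h where "h z = (f (fst z), f (snd z))" for z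
  define \<pi> where "\<pi> = distr (measure_pmf \<gamma>) borel h"
  have m1: "map_pmf fst \<gamma> = G1" and m2: "map_pmf snd \<gamma> = G2" using assms unfolding cpl_def by auto
  have "\<pi> \<in> couplings (distr (measure_pmf G1) borel f) (distr (measure_pmf G2) borel f)"
    unfolding couplings_def
  proof (intro CollectI conjI)
    show "prob_space \<pi>" unfolding \<pi>_def by (intro measure_pmf.prob_space_distr) auto
    show "sets \<pi> = sets borel" unfolding \<pi>_def by simp
    have "distr \<pi> borel fst = distr (measure_pmf \<gamma>) borel (\<lambda>z. f (fst z))"
      unfolding \<pi>_def by (subst distr_distr) (auto simp: h_def comp_def)
    then show "distr \<pi> borel fst = distr (measure_pmf G1) borel f" using m1 by (simp add: distr_pmf_comp)
    have "distr \<pi> borel snd = distr (measure_pmf \<gamma>) borel (\<lambda>z. f (snd z))"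
      unfolding \<pi>_def by (subst distr_distr) (auto simp: h_def comp_def)
    then show "distr \<pi> borel snd = distr (measure_pmf G2) borel f" using m2 by (simp add: distr_pmf_comp)
  qed
  moreover have "(\<integral>\<^sup>+ z. ennreal (\<bar>fst z - snd z\<bar> powr p) \<partial>\<pi>) = costp p f \<gamma>"
    unfolding \<pi>_def costp_def by (subst nn_integral_distr) (auto simp: h_def)
  ultimately show ?thesis unfolding wasserstein_pp_def by (metis (mono_tags, lifting) INF_lower)
qed

lemma AE_push:
  fixes f :: "'a \<Rightarrow> real"
  assumes "finite X" "set_pmf G \<subseteq> f -` X"
  shows "AE x in distr (measure_pmf G) borel f. x \<in> X"
proof -
  have "closed X" using assms(1) by (rule finite_imp_closed)
  then have "{x \<in> space borel. x \<in> X} \<in> sets borel" by auto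
  then show ?thesis using assms(2)
    by (subst AE_distr_iff) (auto simp: AE_measure_pmf_iff)
qed

lemma cost_ge_W_dir:
  fixes f :: "'a \<Rightarrow> real"
  assumes fin1: "finite (set_pmf G1)" and fin2: "finite (set_pmf G2)"
    and pi: "\<pi> \<in> couplings (distr (measure_pmf G1) borel f) (distr (measure_pmf G2) borel f)"
  shows "\<exists>\<gamma>\<in>cpl G1 G2. costp p f \<gamma> \<le> (\<integral>\<^sup>+ z. ennreal (\<bar>fst z - snd z\<bar> powr p) \<partial>\<pi>)"
proof -
  define \<alpha> where "\<alpha> = distr (measure_pmf G1) borel f"
  define \<beta> where "\<beta> = distr (measure_pmf G2) borel f"
  have sp: "sets \<pi> = sets borel" and ps: "prob_space \<pi>" and pa: "distr \<pi> borel fst = \<alpha>"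
    and pb: "distr \<pi> borel snd = \<beta>"
    using pi unfolding couplings_def \<alpha>_def \<beta>_def by auto
  have spc: "space \<pi> = UNIV" using sets_eq_imp_space_eq[OF sp] by simp
  have mfst: "fst \<in> measurable \<pi> borel" using meas_pi[OF sp fst_borel] .
  have msnd: "snd \<in> measurable \<pi> borel" using meas_pi[OF sp snd_borel] .
  define X where "X = f ` set_pmf G1"
  define Y where "Y = f ` set_pmf G2"
  have finX: "finite X" "finite Y" unfolding X_def Y_def using fin1 fin2 by auto
  have clX: "closed X" "closed Y" using finX by (auto intro: finite_imp_closed)
  have "AE x in \<alpha>. x \<in> X" unfolding \<alpha>_def X_def by (rule AE_push) (use fin1 in auto)
  then have aeX: "AE z in \<pi>. fst z \<in> X" unfolding pa[symmetric] using clX mfst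
    by (subst (asm) AE_distr_iff) auto
  have "AE x in \<beta>. x \<in> Y" unfolding \<beta>_def Y_def by (rule AE_push) (use fin2 in auto)
  then have aeY: "AE z in \<pi>. snd z \<in> Y" unfolding pb[symmetric] using clX msnd
    by (subst (asm) AE_distr_iff) auto
  have aeXY: "AE z in \<pi>. z \<in> X \<times> Y" using aeX aeY by eventually_elim auto
  have finXY: "finite (X \<times> Y)" using finX by auto
  have single_sets: "{z} \<in> sets \<pi>" for z using sp by simp
  have XYsets: "X \<times> Y \<in> sets \<pi>" using sp finXY by (simp add: finite_imp_closed)
  have null_out: "emeasure \<pi> {z} = 0" if "z \<notin> X \<times> Y" for z
  proof -
    have "AE x in \<pi>. x \<notin> {z}" using aeXY by (rule eventually_mono) (use that in auto)
    then show ?thesis using single_sets by (simp add: AE_iff_measurable[OF _ refl] spc)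
  qed
  have emm: "emeasure \<pi> A = ennreal (measure \<pi> A)" for A
    using ps prob_space_def finite_measure.emeasure_eq_measure by blast
  define w where "w z = measure \<pi> {z}" for z
  have w0: "w z \<ge> 0" for z unfolding w_def by simp
  have wout: "w z = 0" if "z \<notin> X \<times> Y" for z unfolding w_def measure_def using null_out[OF that] by simp
  have "(\<integral>\<^sup>+ z. ennreal (w z) \<partial>count_space UNIV) = (\<Sum>z\<in>X \<times> Y. ennreal (w z))"
    by (rule nn_integral_count_space'[OF finXY]) (simp_all add: wout)
  also have "\<dots> = (\<Sum>z\<in>X \<times> Y. emeasure \<pi> {z})" unfolding w_def by (rule sum.cong[OF refl]) (rule emm[symmetric])
  also have "\<dots> = emeasure \<pi> (X \<times> Y)" by (rule emeasure_eq_sum_singleton[symmetric, OF finXY single_sets])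
  also have "\<dots> = 1" using prob_space.emeasure_eq_1_AE[OF ps XYsets aeXY] .
  finally have wsum: "(\<integral>\<^sup>+ z. ennreal (w z) \<partial>count_space UNIV) = 1" .
  define \<rho> where "\<rho> = embed_pmf w"
  have pmf_rho: "pmf \<rho> z = w z" for z unfolding \<rho>_def using w0 wsum by (simp add: pmf_embed_pmf)
  have set_rho: "set_pmf \<rho> \<subseteq> X \<times> Y" unfolding \<rho>_def using w0 wsum wout by (auto simp: set_embed_pmf)
  have key: "(\<integral>\<^sup>+ z. c z \<partial>\<pi>) = (\<integral>\<^sup>+ z. c z \<partial>measure_pmf \<rho>)" if cm: "c \<in> borel_measurable borel" for c
  proof -
    have "(\<integral>\<^sup>+ z. c z \<partial>\<pi>) = (\<integral>\<^sup>+ z. c z * indicator (X \<times> Y) z \<partial>\<pi>)"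
      using aeXY by (intro nn_integral_cong_AE) (auto elim!: eventually_mono)
    also have "\<dots> = (\<Sum>z\<in>X \<times> Y. c z * emeasure \<pi> {z})"
      using nn_integral_indicator_finite[OF finXY, of \<pi> c] single_sets by simp
    also have "\<dots> = (\<Sum>z\<in>X \<times> Y. c z * ennreal (pmf \<rho> z))"
      unfolding pmf_rho w_def using emm by simp
    also have "\<dots> = (\<integral>\<^sup>+ z. c z \<partial>measure_pmf \<rho>)"
      using set_rho finXY by (intro nn_integral_measure_pmf_support[symmetric]) auto
    finally show ?thesis .
  qed
  have marg1: "map_pmf fst \<rho> = map_pmf f G1"
  proof (rule pmf_eqI)
    fix x
    have bs: "fst -` {x} \<in> sets (borel :: (real \<times> real) measure)"
    proof -
      have "fst -` {x} = {x} \<times> (UNIV :: real set)" by auto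
      then show ?thesis by (auto intro!: borel_closed closed_Times)
    qed
    then have bs': "fst -` {x} \<in> sets \<pi>" using sp by simp
    have "(\<integral>\<^sup>+ z. indicator (fst -` {x}) z \<partial>measure_pmf \<rho>) = (\<integral>\<^sup>+ z. indicator (fst -` {x}) z \<partial>\<pi>)"
      by (rule key[symmetric]) (use bs in simp)
    also have "\<dots> = emeasure \<pi> (fst -` {x})" using bs' by simp
    finally have "(\<integral>\<^sup>+ z. indicator (fst -` {x}) z \<partial>measure_pmf \<rho>) = emeasure \<pi> (fst -` {x} \<inter> space \<pi>)" using spc by simp
    then have "(\<integral>\<^sup>+ z. indicator (fst -` {x}) z \<partial>measure_pmf \<rho>) = emeasure \<pi> (fst -` {x} \<inter> space \<pi>)" .
    have "ennreal (pmf (map_pmf fst \<rho>) x) = (\<integral>\<^sup>+ z. indicator (fst -` {x}) z \<partial>measure_pmf \<rho>)"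
      by (simp add: ennreal_pmf_map)
    also have "\<dots> = emeasure \<pi> (fst -` {x} \<inter> space \<pi>)" by fact
    also have "\<dots> = emeasure (distr \<pi> borel fst) {x}" using mfst by (simp add: emeasure_distr)
    also have "\<dots> = emeasure (distr (measure_pmf G1) borel f) {x}" using pa unfolding \<alpha>_def by simp
    also have "\<dots> = emeasure (measure_pmf G1) (f -` {x})" by (simp add: emeasure_distr)
    also have "\<dots> = ennreal (pmf (map_pmf f G1) x)" by (simp add: ennreal_pmf_map)
    finally show "pmf (map_pmf fst \<rho>) x = pmf (map_pmf f G1) x" by simp
  qed
  have marg2: "map_pmf snd \<rho> = map_pmf f G2"
  proof (rule pmf_eqI)
    fix x
    have bs: "snd -` {x} \<in> sets (borel :: (real \<times> real) measure)"
    proof -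
      have "snd -` {x} = (UNIV :: real set) \<times> {x}" by auto
      then show ?thesis by (auto intro!: borel_closed closed_Times)
    qed
    then have bs': "snd -` {x} \<in> sets \<pi>" using sp by simp
    have "(\<integral>\<^sup>+ z. indicator (snd -` {x}) z \<partial>measure_pmf \<rho>) = (\<integral>\<^sup>+ z. indicator (snd -` {x}) z \<partial>\<pi>)"
      by (rule key[symmetric]) (use bs in simp)
    also have "\<dots> = emeasure \<pi> (snd -` {x})" using bs' by simp
    finally have "(\<integral>\<^sup>+ z. indicator (snd -` {x}) z \<partial>measure_pmf \<rho>) = emeasure \<pi> (snd -` {x} \<inter> space \<pi>)" using spc by simp
    then have "(\<integral>\<^sup>+ z. indicator (snd -` {x}) z \<partial>measure_pmf \<rho>) = emeasure \<pi> (snd -` {x} \<inter> space \<pi>)" .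
    have "ennreal (pmf (map_pmf snd \<rho>) x) = (\<integral>\<^sup>+ z. indicator (snd -` {x}) z \<partial>measure_pmf \<rho>)"
      by (simp add: ennreal_pmf_map)
    also have "\<dots> = emeasure \<pi> (snd -` {x} \<inter> space \<pi>)" by fact
    also have "\<dots> = emeasure (distr \<pi> borel snd) {x}" using msnd by (simp add: emeasure_distr)
    also have "\<dots> = emeasure (distr (measure_pmf G2) borel f) {x}" using pb unfolding \<beta>_def by simp
    also have "\<dots> = emeasure (measure_pmf G2) (f -` {x})" by (simp add: emeasure_distr)
    also have "\<dots> = ennreal (pmf (map_pmf f G2) x)" by (simp add: ennreal_pmf_map)
    finally show "pmf (map_pmf snd \<rho>) x = pmf (map_pmf f G2) x" by simp
  qed
  define \<gamma> where "\<gamma> = bind_pmf \<rho> (\<lambda>z. pair_pmf (cond_pmf G1 {\<theta>. f \<theta> = fst z}) (cond_pmf G2 {\<theta>. f \<theta> = snd z}))"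
  have cancel1: "bind_pmf (map_pmf f G1) (\<lambda>x. cond_pmf G1 {\<theta>. f \<theta> = x}) = G1"
    by (rule bind_cond_pmf_cancel) (auto simp: measure_map_pmf vimage_def)
  have cancel2: "bind_pmf (map_pmf f G2) (\<lambda>x. cond_pmf G2 {\<theta>. f \<theta> = x}) = G2"
    by (rule bind_cond_pmf_cancel) (auto simp: measure_map_pmf vimage_def)
  have "map_pmf fst \<gamma> = G1"
    unfolding \<gamma>_def map_bind_pmf map_fst_pair_pmf
    using cancel1 unfolding marg1[symmetric] bind_map_pmf .
  moreover have "map_pmf snd \<gamma> = G2"
    unfolding \<gamma>_def map_bind_pmf map_snd_pair_pmf
    using cancel2 unfolding marg2[symmetric] bind_map_pmf .
  ultimately have gc: "\<gamma> \<in> cpl G1 G2" unfolding cpl_def by auto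
  have "costp p f \<gamma> = (\<integral>\<^sup>+ z. (\<integral>\<^sup>+ u. ennreal (\<bar>f (fst u) - f (snd u)\<bar> powr p)
      \<partial>measure_pmf (pair_pmf (cond_pmf G1 {\<theta>. f \<theta> = fst z}) (cond_pmf G2 {\<theta>. f \<theta> = snd z}))) \<partial>measure_pmf \<rho>)"
    unfolding costp_def \<gamma>_def by (simp add: nn_integral_bind_pmf)
  also have "\<dots> = (\<integral>\<^sup>+ z. ennreal (\<bar>fst z - snd z\<bar> powr p) \<partial>measure_pmf \<rho>)"
  proof (rule nn_integral_cong_AE)
    show "AE z in measure_pmf \<rho>. (\<integral>\<^sup>+ u. ennreal (\<bar>f (fst u) - f (snd u)\<bar> powr p)
      \<partial>measure_pmf (pair_pmf (cond_pmf G1 {\<theta>. f \<theta> = fst z}) (cond_pmf G2 {\<theta>. f \<theta> = snd z}))) =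
      ennreal (\<bar>fst z - snd z\<bar> powr p)"
      unfolding AE_measure_pmf_iff
    proof
      fix z assume "z \<in> set_pmf \<rho>"
      then have z: "fst z \<in> X" "snd z \<in> Y" using set_rho by auto
      have ne1: "set_pmf G1 \<inter> {\<theta>. f \<theta> = fst z} \<noteq> {}" using z unfolding X_def by auto
      have ne2: "set_pmf G2 \<inter> {\<theta>. f \<theta> = snd z} \<noteq> {}" using z unfolding Y_def by auto
      have "(\<integral>\<^sup>+ u. ennreal (\<bar>f (fst u) - f (snd u)\<bar> powr p)
          \<partial>measure_pmf (pair_pmf (cond_pmf G1 {\<theta>. f \<theta> = fst z}) (cond_pmf G2 {\<theta>. f \<theta> = snd z}))) =
          (\<integral>\<^sup>+ u. ennreal (\<bar>fst z - snd z\<bar> powr p)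
          \<partial>measure_pmf (pair_pmf (cond_pmf G1 {\<theta>. f \<theta> = fst z}) (cond_pmf G2 {\<theta>. f \<theta> = snd z})))"
        by (intro nn_integral_cong_AE) (auto simp: AE_measure_pmf_iff set_cond_pmf[OF ne1] set_cond_pmf[OF ne2])
      also have "\<dots> = ennreal (\<bar>fst z - snd z\<bar> powr p)" by simp
      finally show "(\<integral>\<^sup>+ u. ennreal (\<bar>f (fst u) - f (snd u)\<bar> powr p)
          \<partial>measure_pmf (pair_pmf (cond_pmf G1 {\<theta>. f \<theta> = fst z}) (cond_pmf G2 {\<theta>. f \<theta> = snd z}))) =
          ennreal (\<bar>fst z - snd z\<bar> powr p)" .
    qed
  qed
  also have "\<dots> = (\<integral>\<^sup>+ z. ennreal (\<bar>fst z - snd z\<bar> powr p) \<partial>\<pi>)"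
    by (rule key[symmetric]) (rule cost_meas)
  finally have "costp p f \<gamma> \<le> (\<integral>\<^sup>+ z. ennreal (\<bar>fst z - snd z\<bar> powr p) \<partial>\<pi>)" by simp
  then show ?thesis using gc by blast
qed

lemma W_eq_Wl:
  fixes f :: "'a \<Rightarrow> real"
  assumes fin1: "finite (set_pmf G1)" and fin2: "finite (set_pmf G2)"
  shows "wasserstein_pp p (distr (measure_pmf G1) borel f) (distr (measure_pmf G2) borel f) = Wl p f G1 G2"
proof (rule antisym)
  show "wasserstein_pp p (distr (measure_pmf G1) borel f) (distr (measure_pmf G2) borel f) \<le> Wl p f G1 G2"
    unfolding Wl_def by (intro INF_greatest W_le_cost)
  show "Wl p f G1 G2 \<le> wasserstein_pp p (distr (measure_pmf G1) borel f) (distr (measure_pmf G2) borel f)"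
    unfolding wasserstein_pp_def
  proof (rule INF_greatest)
    fix \<pi> assume "\<pi> \<in> couplings (distr (measure_pmf G1) borel f) (distr (measure_pmf G2) borel f)"
    then obtain \<gamma> where "\<gamma> \<in> cpl G1 G2" "costp p f \<gamma> \<le> (\<integral>\<^sup>+ z. ennreal (\<bar>fst z - snd z\<bar> powr p) \<partial>\<pi>)"
      using cost_ge_W_dir[OF fin1 fin2] by blast
    then show "Wl p f G1 G2 \<le> (\<integral>\<^sup>+ z. ennreal (\<bar>fst z - snd z\<bar> powr p) \<partial>\<pi>)"
      unfolding Wl_def by (meson INF_lower order_trans)
  qed
qed

lemma set_cpl: "\<gamma> \<in> cpl G1 G2 \<Longrightarrow> set_pmf \<gamma> \<subseteq> set_pmf G1 \<times> set_pmf G2"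
proof
  fix z assume g: "\<gamma> \<in> cpl G1 G2" and z: "z \<in> set_pmf \<gamma>"
  have "G1 = map_pmf fst \<gamma>" "G2 = map_pmf snd \<gamma>" using g unfolding cpl_def by auto
  then have "set_pmf G1 = fst ` set_pmf \<gamma>" "set_pmf G2 = snd ` set_pmf \<gamma>" by simp_all
  then show "z \<in> set_pmf G1 \<times> set_pmf G2" using imageI[OF z, of fst] imageI[OF z, of snd] by (simp add: mem_Times_iff)
qed

lemma costp_finite_sum:
  assumes "finite (set_pmf \<gamma>)"
  shows "costp p f \<gamma> = ennreal (\<Sum>z\<in>set_pmf \<gamma>. \<bar>f (fst z) - f (snd z)\<bar> powr p * pmf \<gamma> z)"
proof -
  have "costp p f \<gamma> = (\<Sum>z\<in>set_pmf \<gamma>. ennreal (\<bar>f (fst z) - f (snd z)\<bar> powr p) * ennreal (pmf \<gamma> z))"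
    unfolding costp_def by (rule nn_integral_measure_pmf_finite) (use assms in auto)
  also have "\<dots> = (\<Sum>z\<in>set_pmf \<gamma>. ennreal (\<bar>f (fst z) - f (snd z)\<bar> powr p * pmf \<gamma> z))"
    by (intro sum.cong refl) (simp add: ennreal_mult)
  also have "\<dots> = ennreal (\<Sum>z\<in>set_pmf \<gamma>. \<bar>f (fst z) - f (snd z)\<bar> powr p * pmf \<gamma> z)"
    by (rule sum_ennreal) simp
  finally show ?thesis .
qed

lemma costp_cpl_fin:
  assumes "\<gamma> \<in> cpl G1 G2" "finite (set_pmf G1)" "finite (set_pmf G2)"
  shows "costp p f \<gamma> < \<infinity>"
proof -
  have "finite (set_pmf G1 \<times> set_pmf G2)" using assms(2,3) by simp
  then have "finite (set_pmf \<gamma>)" using finite_subset[OF set_cpl[OF assms(1)]] by blast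
  then show ?thesis by (simp add: costp_finite_sum)
qed

lemma pair_cpl: "pair_pmf G1 G2 \<in> cpl G1 G2"
  unfolding cpl_def by (simp add: map_fst_pair_pmf map_snd_pair_pmf)

lemma Wl_fin:
  assumes "finite (set_pmf G1)" "finite (set_pmf G2)"
  shows "Wl p f G1 G2 < \<infinity>"
proof -
  have "Wl p f G1 G2 \<le> costp p f (pair_pmf G1 G2)" unfolding Wl_def by (rule INF_lower[OF pair_cpl])
  also have "\<dots> < \<infinity>" by (rule costp_cpl_fin[OF pair_cpl assms])
  finally show ?thesis .
qed

lemma Wl_diag:
  assumes "p > 0"
  shows "Wl p f G G = 0"
proof -
  have c: "map_pmf (\<lambda>x. (x, x)) G \<in> cpl G G" unfolding cpl_def by (simp add: pmf.map_comp o_def)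
  have z: "costp p f (map_pmf (\<lambda>x. (x, x)) G) = 0" unfolding costp_def using assms by simp
  have "Wl p f G G \<le> costp p f (map_pmf (\<lambda>x. (x, x)) G)" unfolding Wl_def by (rule INF_lower[OF c])
  then have "Wl p f G G \<le> 0" using z by simp
  then show ?thesis by simp
qed

lemma Wl_bound:
  assumes "p > 0" and R: "\<And>\<theta>. \<theta> \<in> set_pmf G1 \<union> set_pmf G2 \<Longrightarrow> \<bar>f \<theta>\<bar> \<le> R"
  shows "Wl p f G1 G2 \<le> ennreal ((2 * R) powr p)"
proof -
  have "Wl p f G1 G2 \<le> costp p f (pair_pmf G1 G2)" unfolding Wl_def by (rule INF_lower[OF pair_cpl])
  also have "\<dots> \<le> (\<integral>\<^sup>+ z. ennreal ((2 * R) powr p) \<partial>measure_pmf (pair_pmf G1 G2))"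
    unfolding costp_def
  proof (intro nn_integral_mono_AE, unfold AE_measure_pmf_iff, intro ballI)
    fix z assume "z \<in> set_pmf (pair_pmf G1 G2)"
    then have "\<bar>f (fst z)\<bar> \<le> R" "\<bar>f (snd z)\<bar> \<le> R" using R by (auto simp: set_pair_pmf)
    then have "\<bar>f (fst z) - f (snd z)\<bar> \<le> 2 * R" by linarith
    then show "ennreal (\<bar>f (fst z) - f (snd z)\<bar> powr p) \<le> ennreal ((2 * R) powr p)"
      using assms(1) by (intro ennreal_leI powr_mono2) auto
  qed
  also have "\<dots> = ennreal ((2 * R) powr p)" by simp
  finally show ?thesis .
qed

lemma glue:
  assumes g12: "\<gamma>12 \<in> cpl G1 G2" and g23: "\<gamma>23 \<in> cpl G2 G3"
  shows "\<exists>\<gamma>. map_pmf (\<lambda>t. (fst t, fst (snd t))) \<gamma> = \<gamma>12 \<and> map_pmf (\<lambda>t. (fst (snd t), snd (snd t))) \<gamma> = \<gamma>23"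
proof -
  define \<gamma> where "\<gamma> = bind_pmf \<gamma>12 (\<lambda>z. map_pmf (\<lambda>y. (fst z, snd z, snd y)) (cond_pmf \<gamma>23 {y. fst y = snd z}))"
  have m1: "map_pmf (\<lambda>t. (fst t, fst (snd t))) \<gamma> = \<gamma>12"
    unfolding \<gamma>_def map_bind_pmf pmf.map_comp o_def by (simp add: map_pmf_const bind_return_pmf')
  have s12: "map_pmf snd \<gamma>12 = G2" and f23: "map_pmf fst \<gamma>23 = G2" using g12 g23 unfolding cpl_def by auto
  have "map_pmf (\<lambda>t. (fst (snd t), snd (snd t))) \<gamma> =
      bind_pmf \<gamma>12 (\<lambda>z. map_pmf (\<lambda>y. (snd z, snd y)) (cond_pmf \<gamma>23 {y. fst y = snd z}))"
    unfolding \<gamma>_def map_bind_pmf pmf.map_comp o_def by simp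
  also have "\<dots> = bind_pmf \<gamma>12 (\<lambda>z. cond_pmf \<gamma>23 {y. fst y = snd z})"
  proof (rule bind_pmf_cong[OF refl])
    fix z assume z: "z \<in> set_pmf \<gamma>12"
    then have "snd z \<in> set_pmf G2" using s12 by auto
    then have "snd z \<in> fst ` set_pmf \<gamma>23" using f23 by auto
    then obtain y where "y \<in> set_pmf \<gamma>23" "fst y = snd z" by auto
    then have ne: "set_pmf \<gamma>23 \<inter> {y. fst y = snd z} \<noteq> {}" by blast
    show "map_pmf (\<lambda>y. (snd z, snd y)) (cond_pmf \<gamma>23 {y. fst y = snd z}) = cond_pmf \<gamma>23 {y. fst y = snd z}"
      by (rule map_pmf_idI) (auto simp: set_cond_pmf[OF ne])
  qed
  also have "\<dots> = bind_pmf G2 (\<lambda>b. cond_pmf \<gamma>23 {y. fst y = b})"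
    unfolding s12[symmetric] bind_map_pmf ..
  also have "\<dots> = \<gamma>23"
    unfolding f23[symmetric]
    by (rule bind_cond_pmf_cancel) (auto simp: measure_map_pmf vimage_def)
  finally show ?thesis using m1 by blast
qed

lemma glue_cost:
  assumes p: "p \<ge> 1" and g12: "\<gamma>12 \<in> cpl G1 G2" and g23: "\<gamma>23 \<in> cpl G2 G3"
    and fin: "finite (set_pmf G1)" "finite (set_pmf G2)" "finite (set_pmf G3)"
  shows "\<exists>\<gamma>13\<in>cpl G1 G3. costp p f \<gamma>13 \<le>
     ennreal ((enn2real (costp p f \<gamma>12) powr (1/p) + enn2real (costp p f \<gamma>23) powr (1/p)) powr p)"
proof -
  obtain \<gamma> where g1: "map_pmf (\<lambda>t. (fst t, fst (snd t))) \<gamma> = \<gamma>12"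
    and g2: "map_pmf (\<lambda>t. (fst (snd t), snd (snd t))) \<gamma> = \<gamma>23" using glue[OF g12 g23] by blast
  define \<gamma>13 where "\<gamma>13 = map_pmf (\<lambda>t. (fst t, snd (snd t))) \<gamma>"
  have "map_pmf fst \<gamma>13 = map_pmf fst \<gamma>12" unfolding \<gamma>13_def g1[symmetric] pmf.map_comp o_def by simp
  moreover have "map_pmf snd \<gamma>13 = map_pmf snd \<gamma>23" unfolding \<gamma>13_def g2[symmetric] pmf.map_comp o_def by simp
  ultimately have c13: "\<gamma>13 \<in> cpl G1 G3" using g12 g23 unfolding cpl_def by auto
  define F where "F t = \<bar>f (fst t) - f (fst (snd t))\<bar>" for t :: "'a \<times> 'a \<times> 'a"
  define H where "H t = \<bar>f (fst (snd t)) - f (snd (snd t))\<bar>" for t :: "'a \<times> 'a \<times> 'a"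
  have cF: "(\<integral>\<^sup>+ t. ennreal (F t powr p) \<partial>measure_pmf \<gamma>) = costp p f \<gamma>12"
    unfolding costp_def g1[symmetric] F_def by (simp add: nn_integral_map_pmf)
  have cH: "(\<integral>\<^sup>+ t. ennreal (H t powr p) \<partial>measure_pmf \<gamma>) = costp p f \<gamma>23"
    unfolding costp_def g2[symmetric] H_def by (simp add: nn_integral_map_pmf)
  have "costp p f \<gamma>13 = (\<integral>\<^sup>+ t. ennreal (\<bar>f (fst t) - f (snd (snd t))\<bar> powr p) \<partial>measure_pmf \<gamma>)"
    unfolding costp_def \<gamma>13_def by (simp add: nn_integral_map_pmf)
  also have "\<dots> \<le> (\<integral>\<^sup>+ t. ennreal ((F t + H t) powr p) \<partial>measure_pmf \<gamma>)"
  proof (intro nn_integral_mono ennreal_leI powr_mono2)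
    fix t show "\<bar>f (fst t) - f (snd (snd t))\<bar> \<le> F t + H t" unfolding F_def H_def by linarith
  qed (use p in auto)
  also have "\<dots> \<le> ennreal ((enn2real (\<integral>\<^sup>+ t. ennreal (F t powr p) \<partial>measure_pmf \<gamma>) powr (1/p) +
      enn2real (\<integral>\<^sup>+ t. ennreal (H t powr p) \<partial>measure_pmf \<gamma>) powr (1/p)) powr p)"
  proof (rule minkowski_nn[OF p])
    show "(\<integral>\<^sup>+ t. ennreal (F t powr p) \<partial>measure_pmf \<gamma>) < \<infinity>" unfolding cF by (rule costp_cpl_fin[OF g12 fin(1,2)])
    show "(\<integral>\<^sup>+ t. ennreal (H t powr p) \<partial>measure_pmf \<gamma>) < \<infinity>" unfolding cH by (rule costp_cpl_fin[OF g23 fin(2,3)])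
  qed (auto simp: F_def H_def)
  finally show ?thesis using c13 unfolding cF cH by blast
qed

lemma enn2real_le_of_less:
  assumes "(x::ennreal) < ennreal a + ennreal e" "a \<ge> 0" "e \<ge> 0"
  shows "enn2real x \<le> a + e"
proof -
  have "x \<le> ennreal (a + e)" using assms by (simp add: ennreal_plus)
  then show ?thesis using assms by (simp add: enn2real_leI)
qed

lemma Wl_tri:
  assumes p: "p \<ge> 1"
    and fin: "finite (set_pmf G1)" "finite (set_pmf G2)" "finite (set_pmf G3)"
  shows "enn2real (Wl p f G1 G3) powr (1/p) \<le>
     enn2real (Wl p f G1 G2) powr (1/p) + enn2real (Wl p f G2 G3) powr (1/p)"
proof -
  define a where "a = enn2real (Wl p f G1 G2)"
  define b where "b = enn2real (Wl p f G2 G3)"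
  define X where "X = enn2real (Wl p f G1 G3)"
  have ab0: "a \<ge> 0" "b \<ge> 0" "X \<ge> 0" unfolding a_def b_def X_def by auto
  have Wa: "Wl p f G1 G2 = ennreal a" unfolding a_def using Wl_fin[OF fin(1,2)] by (simp add: less_top ennreal_enn2real_if)
  have Wb: "Wl p f G2 G3 = ennreal b" unfolding b_def using Wl_fin[OF fin(2,3)] by (simp add: less_top ennreal_enn2real_if)
  have main: "X powr (1/p) \<le> (a + e) powr (1/p) + (b + e) powr (1/p)" if e: "e > 0" for e
  proof -
    obtain \<gamma>12 where g12: "\<gamma>12 \<in> cpl G1 G2" "costp p f \<gamma>12 < Wl p f G1 G2 + ennreal e"
      using INF_approx_ennreal[OF e, of "Wl p f G1 G2" "costp p f" "cpl G1 G2"] Wa unfolding Wl_def by auto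
    obtain \<gamma>23 where g23: "\<gamma>23 \<in> cpl G2 G3" "costp p f \<gamma>23 < Wl p f G2 G3 + ennreal e"
      using INF_approx_ennreal[OF e, of "Wl p f G2 G3" "costp p f" "cpl G2 G3"] Wb unfolding Wl_def by auto
    have c12: "enn2real (costp p f \<gamma>12) \<le> a + e" using g12(2) Wa e ab0 by (intro enn2real_le_of_less) auto
    have c23: "enn2real (costp p f \<gamma>23) \<le> b + e" using g23(2) Wb e ab0 by (intro enn2real_le_of_less) auto
    obtain \<gamma>13 where g13: "\<gamma>13 \<in> cpl G1 G3" "costp p f \<gamma>13 \<le>
       ennreal ((enn2real (costp p f \<gamma>12) powr (1/p) + enn2real (costp p f \<gamma>23) powr (1/p)) powr p)"
      using glue_cost[OF p g12(1) g23(1) fin] by blast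
    have "Wl p f G1 G3 \<le> costp p f \<gamma>13" unfolding Wl_def by (rule INF_lower[OF g13(1)])
    then have "X \<le> enn2real (costp p f \<gamma>13)" unfolding X_def
      using costp_cpl_fin[OF g13(1) fin(1,3)] by (intro enn2real_mono) auto
    also have "\<dots> \<le> (enn2real (costp p f \<gamma>12) powr (1/p) + enn2real (costp p f \<gamma>23) powr (1/p)) powr p"
      using g13(2) by (intro enn2real_leI) auto
    also have "\<dots> \<le> ((a + e) powr (1/p) + (b + e) powr (1/p)) powr p"
      using p c12 c23 by (intro powr_mono2 add_mono) auto
    finally have "X powr (1/p) \<le> (((a + e) powr (1/p) + (b + e) powr (1/p)) powr p) powr (1/p)"
      using ab0 p by (intro powr_mono2) auto
    also have "\<dots> = (a + e) powr (1/p) + (b + e) powr (1/p)"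
      using p by (simp add: powr_powr)
    finally show ?thesis .
  qed
  have ev0: "eventually (\<lambda>x::real. 0 \<le> x) (at_right 0)"
    using eventually_at_right_less[of "0::real"] by (rule eventually_mono) auto
  have lim: "((\<lambda>e. (a + e) powr (1/p) + (b + e) powr (1/p)) \<longlongrightarrow> (a + 0) powr (1/p) + (b + 0) powr (1/p)) (at_right 0)"
    using p ab0
    by (intro tendsto_add tendsto_powr' tendsto_const tendsto_ident_at)
       (use ev0 in auto)
  have "X powr (1/p) \<le> (a + 0) powr (1/p) + (b + 0) powr (1/p)"
  proof (rule tendsto_lowerbound[OF lim])
    show "\<forall>\<^sub>F e in at_right 0. X powr (1 / p) \<le> (a + e) powr (1 / p) + (b + e) powr (1 / p)"
      using main eventually_at_right_less[of 0] by (auto elim: eventually_mono)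
  qed simp
  then show ?thesis unfolding X_def a_def b_def by simp
qed

lemma Wl_zero:
  fixes f :: "'a \<Rightarrow> real"
  assumes p: "p > 0" and fin: "finite (set_pmf G1)" "finite (set_pmf G2)"
    and inj: "inj_on f (set_pmf G1 \<union> set_pmf G2)" and W0: "Wl p f G1 G2 = 0"
  shows "G1 = G2"
proof (rule ccontr)
  assume "G1 \<noteq> G2"
  then obtain \<theta> where th: "pmf G2 \<theta> < pmf G1 \<theta>" using pmf_neq_exists_less[of G2 G1] by auto
  then have thS: "\<theta> \<in> set_pmf G1" by (metis pmf_nonneg not_le pmf_eq_0_set_pmf)
  define D where "D = (\<lambda>\<theta>'. \<bar>f \<theta> - f \<theta>'\<bar>) ` (set_pmf G2 - {\<theta>}) \<union> {1}"
  define \<delta> where "\<delta> = Min D"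
  have finD: "finite D" "D \<noteq> {}" unfolding D_def using fin by auto
  have Dpos: "\<forall>d\<in>D. d > 0"
  proof
    fix d assume "d \<in> D"
    then consider "d = 1" | \<theta>' where "\<theta>' \<in> set_pmf G2" "\<theta>' \<noteq> \<theta>" "d = \<bar>f \<theta> - f \<theta>'\<bar>" unfolding D_def by auto
    then show "d > 0"
    proof cases
      case 2
      then have "f \<theta> \<noteq> f \<theta>'" using inj thS unfolding inj_on_def by blast
      then show ?thesis using 2 by auto
    qed simp
  qed
  have dpos: "\<delta> > 0" unfolding \<delta>_def using finD Dpos by auto
  have dle: "\<delta> \<le> \<bar>f \<theta> - f \<theta>'\<bar>" if "\<theta>' \<in> set_pmf G2" "\<theta>' \<noteq> \<theta>" for \<theta>'
    unfolding \<delta>_def using finD that unfolding D_def by (intro Min_le) auto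
  define c0 where "c0 = \<delta> powr p * (pmf G1 \<theta> - pmf G2 \<theta>)"
  have c0pos: "c0 > 0" unfolding c0_def using dpos th by auto
  define E where "E = {z. fst z = \<theta> \<and> snd z \<noteq> \<theta>}"
  have lower: "ennreal c0 \<le> costp p f \<gamma>" if g: "\<gamma> \<in> cpl G1 G2" for \<gamma>
  proof -
    have m: "map_pmf fst \<gamma> = G1" "map_pmf snd \<gamma> = G2" using g unfolding cpl_def by auto
    have "(\<integral>\<^sup>+ z. ennreal (\<delta> powr p) * indicator E z \<partial>measure_pmf \<gamma>) \<le> costp p f \<gamma>"
      unfolding costp_def
    proof (intro nn_integral_mono_AE, unfold AE_measure_pmf_iff, intro ballI)
      fix z assume z: "z \<in> set_pmf \<gamma>"
      show "ennreal (\<delta> powr p) * indicator E z \<le> ennreal (\<bar>f (fst z) - f (snd z)\<bar> powr p)"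
      proof (cases "z \<in> E")
        case True
        then have "snd z \<in> set_pmf G2" "snd z \<noteq> \<theta>" "fst z = \<theta>" using set_cpl[OF g] z unfolding E_def by auto
        then have "\<delta> \<le> \<bar>f (fst z) - f (snd z)\<bar>" using dle by auto
        then have "\<delta> powr p \<le> \<bar>f (fst z) - f (snd z)\<bar> powr p" using dpos p by (intro powr_mono2) auto
        then show ?thesis using True by (simp add: ennreal_leI)
      qed simp
    qed
    moreover have "(\<integral>\<^sup>+ z. ennreal (\<delta> powr p) * indicator E z \<partial>measure_pmf \<gamma>) = ennreal (\<delta> powr p) * emeasure (measure_pmf \<gamma>) E"
      by (simp add: nn_integral_cmult_indicator)
    moreover have "measure_pmf.prob \<gamma> E \<ge> pmf G1 \<theta> - pmf G2 \<theta>"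
    proof -
      have split: "fst -` {\<theta>} = E \<union> {(\<theta>, \<theta>)}" "E \<inter> {(\<theta>, \<theta>)} = {}" unfolding E_def by auto
      have "pmf G1 \<theta> = measure_pmf.prob \<gamma> (fst -` {\<theta>})" unfolding m(1)[symmetric] by (simp add: pmf_map)
      also have "\<dots> = measure_pmf.prob \<gamma> E + measure_pmf.prob \<gamma> {(\<theta>, \<theta>)}"
        unfolding split(1) using measure_pmf.finite_measure_Union[where M=\<gamma> and A=E and B="{(\<theta>, \<theta>)}"] split(2) by simp
      finally have 1: "pmf G1 \<theta> = measure_pmf.prob \<gamma> E + measure_pmf.prob \<gamma> {(\<theta>, \<theta>)}" .
      have "measure_pmf.prob \<gamma> {(\<theta>, \<theta>)} \<le> measure_pmf.prob \<gamma> (snd -` {\<theta>})"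
        by (intro measure_pmf.finite_measure_mono) auto
      also have "\<dots> = pmf G2 \<theta>" unfolding m(2)[symmetric] by (simp add: pmf_map)
      finally show ?thesis using 1 by simp
    qed
    then have "ennreal (pmf G1 \<theta> - pmf G2 \<theta>) \<le> emeasure (measure_pmf \<gamma>) E"
      by (simp add: measure_pmf.emeasure_eq_measure ennreal_leI)
    then have "ennreal (\<delta> powr p) * ennreal (pmf G1 \<theta> - pmf G2 \<theta>) \<le> ennreal (\<delta> powr p) * emeasure (measure_pmf \<gamma>) E"
      by (rule mult_left_mono) simp
    ultimately show ?thesis unfolding c0_def using th by (simp add: ennreal_mult)
  qed
  have "ennreal c0 \<le> Wl p f G1 G2" unfolding Wl_def by (rule INF_greatest) (rule lower)
  then show False using W0 c0pos by simp
qed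

lemma Wl_meas:
  fixes F :: "'u::topological_space \<Rightarrow> 'a \<Rightarrow> real"
  assumes cont: "\<And>\<theta>. continuous_on UNIV (\<lambda>u. F u \<theta>)" and p: "p > 0"
    and fin: "finite (set_pmf G1)" "finite (set_pmf G2)" and sM: "sets M = sets borel"
  shows "(\<lambda>u. Wl p (F u) G1 G2) \<in> borel_measurable M"
proof (rule borel_measurableI_less)
  fix y
  have sp: "space M = UNIV" using sets_eq_imp_space_eq[OF sM] by simp
  have op: "open {u. costp p (F u) \<gamma> < y}" if g: "\<gamma> \<in> cpl G1 G2" for \<gamma>
  proof -
    have fg: "finite (set_pmf \<gamma>)" using set_cpl[OF g] fin by (meson finite_SigmaI finite_subset)
    have "continuous_on UNIV (\<lambda>u. ennreal (\<Sum>z\<in>set_pmf \<gamma>. \<bar>F u (fst z) - F u (snd z)\<bar> powr p * pmf \<gamma> z))"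
      using p by (intro continuous_on_ennreal continuous_on_sum continuous_on_mult continuous_on_powr'
          continuous_on_const continuous_on_rabs continuous_on_diff cont) auto
    then have "open {u. ennreal (\<Sum>z\<in>set_pmf \<gamma>. \<bar>F u (fst z) - F u (snd z)\<bar> powr p * pmf \<gamma> z) < y}"
      by (intro open_Collect_less continuous_on_const)
    then show ?thesis using costp_finite_sum[OF fg] by simp
  qed
  have "{u \<in> space M. Wl p (F u) G1 G2 < y} = (\<Union>\<gamma>\<in>cpl G1 G2. {u. costp p (F u) \<gamma> < y})"
    unfolding Wl_def sp by (auto simp: INF_less_iff)
  also have "\<dots> \<in> sets M" unfolding sM using op by (intro borel_open open_UN) auto
  finally show "{u \<in> space M. Wl p (F u) G1 G2 < y} \<in> sets M" .
qed

lemma AE_lborel_hyperplane: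
  fixes c :: "'a::euclidean_space"
  assumes "c \<noteq> 0"
  shows "AE x in lborel. c \<bullet> x \<noteq> 0"
proof -
  have neg: "negligible {x. c \<bullet> x = 0}" using assms by (intro negligible_hyperplane) auto
  have cl: "closed {x. c \<bullet> x = 0}" by (rule closed_hyperplane)
  then have "{x. c \<bullet> x = 0} \<in> sets lborel" by simp
  then have "{x. c \<bullet> x = 0} \<in> null_sets lborel"
    using neg null_sets_completion_iff negligible_iff_null_sets by blast
  then have "AE x in lborel. x \<notin> {x. c \<bullet> x = 0}" by (rule AE_not_in)
  then show ?thesis by simp
qed

lemma prob_unif_ball: "prob_space (uniform_measure lborel (ball (0::'a::euclidean_space) 1))"
proof (rule prob_space_uniform_measure)
  show "emeasure lborel (ball (0::'a) 1) \<noteq> \<infinity>" using emeasure_lborel_ball_finite by (simp add: less_top)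
  have v: "unit_ball_vol (real DIM('a)) > 0" by (rule unit_ball_vol_pos) simp
  have e: "emeasure lborel (ball (0::'a) 1) = ennreal (unit_ball_vol (real DIM('a)) * 1 ^ DIM('a))"
    by (rule emeasure_ball) simp
  show "emeasure lborel (ball (0::'a) 1) \<noteq> 0"
    unfolding e power_one mult_1_right ennreal_eq_0_iff using v by linarith
qed

lemma normalize_meas: "(\<lambda>x::'a::euclidean_space. x /\<^sub>R norm x) \<in> borel_measurable borel"
  by (intro borel_measurable_scaleR borel_measurable_inverse borel_measurable_norm measurable_ident_sets) auto

lemma sets_unif_ball: "sets (uniform_measure lborel (ball (0::'a::euclidean_space) 1)) = sets borel"
  by simp

lemma prob_unif_sphere: "prob_space (unif_sphere :: 'a::euclidean_space measure)"
  unfolding unif_sphere_def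
  by (rule prob_space.prob_space_distr[OF prob_unif_ball]) (simp add: normalize_meas measurable_cong_sets[OF sets_unif_ball refl])

lemma sets_unif_sphere: "sets (unif_sphere :: 'a::euclidean_space measure) = sets borel"
  unfolding unif_sphere_def by simp

lemma sym_part_meas: "(\<lambda>Z::real^'n^'n. sym_part Z /\<^sub>R norm (sym_part Z)) \<in> borel_measurable borel"
proof -
  have "continuous_on UNIV (sym_part :: real^'n^'n \<Rightarrow> _)"
    unfolding sym_part_def transpose_def
    by (intro continuous_intros) (auto intro!: continuous_on_vec_lambda continuous_intros)
  then have sm: "(sym_part :: real^'n^'n \<Rightarrow> _) \<in> borel_measurable borel" by (rule borel_measurable_continuous_onI)
  show ?thesis
    by (intro borel_measurable_scaleR borel_measurable_inverse borel_measurable_continuous_onI continuous_on_norm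
       \<open>continuous_on UNIV sym_part\<close> sm)
qed

lemma prob_unif_sym_sphere: "prob_space (unif_sym_sphere :: (real^'n^'n) measure)"
  unfolding unif_sym_sphere_def
  by (rule prob_space.prob_space_distr[OF prob_unif_ball]) (simp add: sym_part_meas measurable_cong_sets[OF sets_unif_ball refl])

lemma sets_unif_sym_sphere: "sets (unif_sym_sphere :: (real^'n^'n) measure) = sets borel"
  unfolding unif_sym_sphere_def by simp

lemma AE_unif_ball:
  assumes "AE x in lborel. P x"
  shows "AE x in uniform_measure lborel (ball (0::'a::euclidean_space) 1). P x"
  by (rule AE_uniform_measureI) (use assms in auto)

lemma AE_unif_sphere_hyper:
  fixes c :: "'a::euclidean_space"
  assumes "c \<noteq> 0"
  shows "AE v in unif_sphere. v \<bullet> c \<noteq> 0"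
proof -
  have op: "{x \<in> space borel. (x::'a) \<bullet> c \<noteq> 0} \<in> sets borel"
    by (intro borel_open) (simp add: open_Collect_neq continuous_intros)
  have "AE x in uniform_measure lborel (ball (0::'a) 1). (x /\<^sub>R norm x) \<bullet> c \<noteq> 0"
  proof (rule AE_unif_ball)
    show "AE x in lborel. (x /\<^sub>R norm x) \<bullet> c \<noteq> 0"
      using AE_lborel_hyperplane[OF assms] by eventually_elim (auto simp: inner_commute)
  qed
  then show ?thesis unfolding unif_sphere_def
    using op by (subst AE_distr_iff) (simp_all add: normalize_meas measurable_cong_sets[OF sets_unif_ball refl])
qed

lemma inv_mult_le1: "inverse (norm x) * norm x \<le> (1::real)"
  by (cases "norm x = 0") auto

lemma norm_normalize_le: "norm (x /\<^sub>R norm x) \<le> 1"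
  by (cases "x = 0") auto

lemma AE_unif_sphere_norm: "AE v in (unif_sphere :: 'a::euclidean_space measure). norm v \<le> 1"
proof -
  have cl: "{x \<in> space borel. norm (x::'a) \<le> 1} \<in> sets borel"
    by (intro borel_closed) (simp add: closed_Collect_le continuous_intros)
  show ?thesis unfolding unif_sphere_def
    using cl by (subst AE_distr_iff) (simp_all add: normalize_meas measurable_cong_sets[OF sets_unif_ball refl] norm_normalize_le inv_mult_le1)
qed

lemma AE_unif_sym_norm: "AE A in (unif_sym_sphere :: (real^'n^'n) measure). norm A \<le> 1"
proof -
  have cl: "{x \<in> space borel. norm (x::real^'n^'n) \<le> 1} \<in> sets borel"
    by (intro borel_closed) (simp add: closed_Collect_le continuous_intros)
  show ?thesis unfolding unif_sym_sphere_def
    using cl by (subst AE_distr_iff) (simp_all add: sym_part_meas measurable_cong_sets[OF sets_unif_ball refl] norm_normalize_le inv_mult_le1)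
qed

lemma trace_mul_sym:
  fixes A L :: "real^'n^'n"
  assumes "transpose L = L"
  shows "trace (A ** L) = A \<bullet> L"
proof -
  have "trace (A ** L) = (\<Sum>i\<in>UNIV. \<Sum>k\<in>UNIV. A $ i $ k * L $ k $ i)"
    by (simp add: trace_def matrix_matrix_mult_def)
  also have "\<dots> = (\<Sum>i\<in>UNIV. \<Sum>k\<in>UNIV. A $ i $ k * L $ i $ k)"
  proof (rule sum.cong[OF refl], rule sum.cong[OF refl])
    fix i k
    have "L $ k $ i = L $ i $ k" using arg_cong[OF assms, of "\<lambda>M. M $ k $ i"] by (simp add: transpose_def)
    then show "A $ i $ k * L $ k $ i = A $ i $ k * L $ i $ k" by (rule arg_cong)
  qed
  also have "\<dots> = A \<bullet> L" by (simp add: inner_vec_def)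
  finally show ?thesis .
qed

lemma sym_part_inner:
  fixes Z L :: "real^'n^'n"
  assumes "transpose L = L"
  shows "sym_part Z \<bullet> L = Z \<bullet> L"
proof -
  have "transpose Z \<bullet> L = Z \<bullet> L"
  proof -
    have "transpose Z \<bullet> L = (\<Sum>i\<in>UNIV. \<Sum>k\<in>UNIV. Z $ k $ i * L $ i $ k)"
      by (simp add: inner_vec_def transpose_def)
    also have "\<dots> = (\<Sum>k\<in>UNIV. \<Sum>i\<in>UNIV. Z $ k $ i * L $ k $ i)"
    proof (subst sum.swap, rule sum.cong[OF refl], rule sum.cong[OF refl])
      fix i k
      have "L $ i $ k = L $ k $ i" using arg_cong[OF assms, of "\<lambda>M. M $ i $ k"] by (simp add: transpose_def)
      then show "Z $ k $ i * L $ i $ k = Z $ k $ i * L $ k $ i" by (rule arg_cong)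
    qed
    also have "\<dots> = Z \<bullet> L" by (simp add: inner_vec_def)
    finally show ?thesis .
  qed
  then show ?thesis unfolding sym_part_def by (simp add: inner_add_left)
qed

lemma AE_unif_sym_hyper:
  fixes M :: "real^'n^'n"
  assumes "M \<noteq> 0" "transpose M = M"
  shows "AE A in unif_sym_sphere. trace (A ** M) \<noteq> 0"
proof -
  have op: "{x \<in> space borel. trace ((x::real^'n^'n) ** M) \<noteq> 0} \<in> sets borel"
    by (intro borel_open) (simp add: trace_mul_sym[OF assms(2)] open_Collect_neq continuous_intros)
  have "AE Z in uniform_measure lborel (ball (0::real^'n^'n) 1). trace ((sym_part Z /\<^sub>R norm (sym_part Z)) ** M) \<noteq> 0"
  proof (rule AE_unif_ball)
    show "AE Z in lborel. trace ((sym_part Z /\<^sub>R norm (sym_part Z)) ** M) \<noteq> 0"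
      using AE_lborel_hyperplane[OF assms(1)]
    proof eventually_elim
      fix Z :: "real^'n^'n" assume "M \<bullet> Z \<noteq> 0"
      then have "sym_part Z \<bullet> M \<noteq> 0" using sym_part_inner[OF assms(2)] by (simp add: inner_commute)
      then have "sym_part Z \<noteq> 0" by auto
      then show "trace ((sym_part Z /\<^sub>R norm (sym_part Z)) ** M) \<noteq> 0"
        using \<open>sym_part Z \<bullet> M \<noteq> 0\<close> by (simp add: trace_mul_sym[OF assms(2)])
    qed
  qed
  then show ?thesis unfolding unif_sym_sphere_def
    using op by (subst AE_distr_iff) (simp_all add: sym_part_meas measurable_cong_sets[OF sets_unif_ball refl])
qed

definition UM :: "((real^2) \<times> (real^'n) \<times> (real^'n^'n)) measure" where
  "UM = unif_sphere \<Otimes>\<^sub>M (unif_sphere \<Otimes>\<^sub>M unif_sym_sphere)"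

definition pr :: "(real^2) \<times> (real^'n) \<times> (real^'n^'n) \<Rightarrow> (real^'n) \<times> (real^'n^'n) \<Rightarrow> real" where
  "pr u = proj_V (fst u) (fst (snd u)) (snd (snd u))"

lemma prob_N: "prob_space (unif_sphere \<Otimes>\<^sub>M (unif_sym_sphere :: (real^'n^'n) measure) :: ((real^'n) \<times> _) measure)"
  by (intro prob_space_pair prob_unif_sphere prob_unif_sym_sphere)

lemma prob_UM: "prob_space (UM :: ((real^2) \<times> (real^'n) \<times> (real^'n^'n)) measure)"
  unfolding UM_def by (intro prob_space_pair prob_unif_sphere prob_N)

lemma sets_N: "sets (unif_sphere \<Otimes>\<^sub>M (unif_sym_sphere :: (real^'n^'n) measure) :: ((real^'n) \<times> _) measure) = sets borel"
proof -
  have "sets (unif_sphere \<Otimes>\<^sub>M (unif_sym_sphere :: (real^'n^'n) measure) :: ((real^'n) \<times> _) measure) = sets (borel \<Otimes>\<^sub>M borel)"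
    by (intro sets_pair_measure_cong sets_unif_sphere sets_unif_sym_sphere)
  then show ?thesis by (simp only: borel_prod)
qed

lemma sets_UM: "sets (UM :: ((real^2) \<times> (real^'n) \<times> (real^'n^'n)) measure) = sets borel"
proof -
  have "sets (UM :: ((real^2) \<times> (real^'n) \<times> (real^'n^'n)) measure) = sets (borel \<Otimes>\<^sub>M borel)"
    unfolding UM_def by (intro sets_pair_measure_cong sets_unif_sphere sets_N)
  then show ?thesis by (simp only: borel_prod)
qed

lemma space_UM: "space (UM :: ((real^2) \<times> (real^'n) \<times> (real^'n^'n)) measure) = UNIV"
  using sets_eq_imp_space_eq[OF sets_UM] by simp

lemma space_N: "space (unif_sphere \<Otimes>\<^sub>M (unif_sym_sphere :: (real^'n^'n) measure) :: ((real^'n) \<times> _) measure) = UNIV"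
  using sets_eq_imp_space_eq[OF sets_N] by simp

lemma psf_UM: "pair_sigma_finite (unif_sphere :: (real^2) measure) (unif_sphere \<Otimes>\<^sub>M (unif_sym_sphere :: (real^'n^'n) measure) :: ((real^'n) \<times> _) measure)"
  by (intro pair_sigma_finite.intro prob_space_imp_sigma_finite prob_unif_sphere prob_N)

lemma psf_N: "pair_sigma_finite (unif_sphere :: (real^'n) measure) (unif_sym_sphere :: (real^'n^'n) measure)"
  by (intro pair_sigma_finite.intro prob_space_imp_sigma_finite prob_unif_sphere prob_unif_sym_sphere)

lemma trace_cont: "continuous_on UNIV (\<lambda>u::'u::topological_space. trace (f u ** (L::real^'n^'n)))" if "continuous_on UNIV f"
  unfolding trace_def matrix_matrix_mult_def using that by (intro continuous_intros) auto

lemma pr_cont: "continuous_on UNIV (\<lambda>u. pr u \<theta>)"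
  unfolding pr_def proj_V_def by (intro continuous_intros trace_cont)

lemma AE_pair_snd:
  assumes psf: "pair_sigma_finite M N" and m: "{x \<in> space (M \<Otimes>\<^sub>M N). Q (snd x)} \<in> sets (M \<Otimes>\<^sub>M N)"
    and ae: "AE y in N. Q y"
  shows "AE x in M \<Otimes>\<^sub>M N. Q (snd x)"
proof -
  have "AE x in M. AE y in N. Q y" using ae by simp
  then show ?thesis using pair_sigma_finite.AE_pair_iff[OF psf, of "\<lambda>x y. Q y"] m by simp
qed

lemma AE_pair_fst:
  assumes psf: "pair_sigma_finite M N" and m: "{x \<in> space (M \<Otimes>\<^sub>M N). P (fst x)} \<in> sets (M \<Otimes>\<^sub>M N)"
    and ae: "AE x in M. P x"
  shows "AE x in M \<Otimes>\<^sub>M N. P (fst x)"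
proof -
  have "AE x in M. AE y in N. P x" using ae by eventually_elim simp
  then show ?thesis using pair_sigma_finite.AE_pair_iff[OF psf, of "\<lambda>x y. P x"] m by simp
qed

lemma AE_UM_norms:
  "AE u in (UM :: ((real^2) \<times> (real^'n) \<times> (real^'n^'n)) measure).
     norm (fst u) \<le> 1 \<and> norm (fst (snd u)) \<le> 1 \<and> norm (snd (snd u)) \<le> 1"
proof -
  have cl: "closed {u :: (real^2) \<times> (real^'n) \<times> (real^'n^'n). norm (fst u) \<le> 1}"
     "closed {u :: (real^2) \<times> (real^'n) \<times> (real^'n^'n). norm (fst (snd u)) \<le> 1}"
     "closed {u :: (real^2) \<times> (real^'n) \<times> (real^'n^'n). norm (snd (snd u)) \<le> 1}"
     "closed {u :: (real^'n) \<times> (real^'n^'n). norm (fst u) \<le> 1}"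
     "closed {u :: (real^'n) \<times> (real^'n^'n). norm (snd u) \<le> 1}"
    by (intro closed_Collect_le continuous_intros)+
  have m1: "{u \<in> space (UM :: ((real^2) \<times> (real^'n) \<times> (real^'n^'n)) measure). norm (fst u) \<le> 1} \<in> sets (UM :: ((real^2) \<times> (real^'n) \<times> (real^'n^'n)) measure)"
    unfolding space_UM sets_UM using cl(1) by (simp add: borel_closed)
  have a1: "AE u in (UM :: ((real^2) \<times> (real^'n) \<times> (real^'n^'n)) measure). norm (fst u) \<le> 1"
    using AE_pair_fst[OF psf_UM m1[unfolded UM_def] AE_unif_sphere_norm] unfolding UM_def .
  have m2: "{x \<in> space (unif_sphere \<Otimes>\<^sub>M (unif_sym_sphere :: (real^'n^'n) measure) :: ((real^'n) \<times> _) measure). norm (fst x) \<le> 1} \<in> sets (unif_sphere \<Otimes>\<^sub>M (unif_sym_sphere :: (real^'n^'n) measure) :: ((real^'n) \<times> _) measure)"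
    unfolding space_N sets_N using cl(4) by (simp add: borel_closed)
  have m3: "{x \<in> space (unif_sphere \<Otimes>\<^sub>M (unif_sym_sphere :: (real^'n^'n) measure) :: ((real^'n) \<times> _) measure). norm (snd x) \<le> 1} \<in> sets (unif_sphere \<Otimes>\<^sub>M (unif_sym_sphere :: (real^'n^'n) measure) :: ((real^'n) \<times> _) measure)"
    unfolding space_N sets_N using cl(5) by (simp add: borel_closed)
  have m4: "{u \<in> space (UM :: ((real^2) \<times> (real^'n) \<times> (real^'n^'n)) measure). norm (fst (snd u)) \<le> 1} \<in> sets (UM :: ((real^2) \<times> (real^'n) \<times> (real^'n^'n)) measure)"
    unfolding space_UM sets_UM using cl(2) by (simp add: borel_closed)
  have m5: "{u \<in> space (UM :: ((real^2) \<times> (real^'n) \<times> (real^'n^'n)) measure). norm (snd (snd u)) \<le> 1} \<in> sets (UM :: ((real^2) \<times> (real^'n) \<times> (real^'n^'n)) measure)"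
    unfolding space_UM sets_UM using cl(3) by (simp add: borel_closed)
  have a2: "AE u in (UM :: ((real^2) \<times> (real^'n) \<times> (real^'n^'n)) measure). norm (fst (snd u)) \<le> 1"
    using AE_pair_snd[OF psf_UM m4[unfolded UM_def] AE_pair_fst[OF psf_N m2 AE_unif_sphere_norm]] unfolding UM_def .
  have a3: "AE u in (UM :: ((real^2) \<times> (real^'n) \<times> (real^'n^'n)) measure). norm (snd (snd u)) \<le> 1"
    using AE_pair_snd[OF psf_UM m5[unfolded UM_def] AE_pair_snd[OF psf_N m3 AE_unif_sym_norm]] unfolding UM_def .
  show ?thesis using a1 a2 a3 by eventually_elim auto
qed

lemma inner2: "(w::real^2) \<bullet> vector [a, b] = w $ 1 * a + w $ 2 * b"
  by (simp add: inner_vec_def sum_2 vector_2)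

lemma AE_sep:
  fixes \<theta> \<theta>' :: "(real^'n) \<times> (real^'n^'n)"
  assumes sp: "spd (snd \<theta>)" "spd (snd \<theta>')" and ne: "\<theta> \<noteq> \<theta>'"
  shows "AE u in (UM :: ((real^2) \<times> (real^'n) \<times> (real^'n^'n)) measure). pr u \<theta> \<noteq> pr u \<theta>'"
proof -
  define c where "c = fst \<theta> - fst \<theta>'"
  define M where "M = mat_log (snd \<theta>) - mat_log (snd \<theta>')"
  have s1: "transpose (mat_log (snd \<theta>)) = mat_log (snd \<theta>)" using mat_log_sym[OF sp(1)] .
  have s2: "transpose (mat_log (snd \<theta>')) = mat_log (snd \<theta>')" using mat_log_sym[OF sp(2)] .
  have Msym: "transpose M = M" unfolding M_def using s1 s2 by (simp add: transpose_def vec_eq_iff)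
  define P where "P w va = (w $ 1 * (c \<bullet> fst va) + w $ 2 * (snd va \<bullet> M) \<noteq> 0)"
    for w :: "real^2" and va :: "(real^'n) \<times> (real^'n^'n)"
  define Q where "Q v A = (c \<bullet> v \<noteq> 0 \<or> A \<bullet> M \<noteq> 0)" for v :: "real^'n" and A :: "real^'n^'n"
  let ?N = "(unif_sphere \<Otimes>\<^sub>M (unif_sym_sphere :: (real^'n^'n) measure) :: ((real^'n) \<times> _) measure)"
  let ?U = "(UM :: ((real^2) \<times> (real^'n) \<times> (real^'n^'n)) measure)"
  have diff: "pr u \<theta> - pr u \<theta>' = fst u $ 1 * (c \<bullet> fst (snd u)) + fst u $ 2 * (snd (snd u) \<bullet> M)" for u
    unfolding pr_def proj_V_def c_def M_def trace_mul_sym[OF s1] trace_mul_sym[OF s2]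
    by (simp add: inner_diff_left inner_diff_right algebra_simps inner_commute)
  have mQ: "{x \<in> space ?N. Q (fst x) (snd x)} \<in> sets ?N"
  proof -
    have "open {x :: (real^'n) \<times> (real^'n^'n). Q (fst x) (snd x)}"
    proof -
      have "open ({x :: (real^'n) \<times> (real^'n^'n). c \<bullet> fst x \<noteq> 0} \<union> {x. snd x \<bullet> M \<noteq> 0})"
        by (intro open_Un open_Collect_neq continuous_intros)
      moreover have "{x :: (real^'n) \<times> (real^'n^'n). Q (fst x) (snd x)} = {x. c \<bullet> fst x \<noteq> 0} \<union> {x. snd x \<bullet> M \<noteq> 0}"
        unfolding Q_def by auto
      ultimately show ?thesis by simp
    qed
    then show ?thesis unfolding space_N sets_N by (simp add: borel_open)
  qed
  have aeQ: "AE x in ?N. Q (fst x) (snd x)"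
  proof (cases "c = 0")
    case False
    have "AE v in (unif_sphere :: (real^'n) measure). AE A in (unif_sym_sphere :: (real^'n^'n) measure). Q v A"
      using AE_unif_sphere_hyper[OF False] by eventually_elim (auto simp: Q_def inner_commute)
    then show ?thesis using pair_sigma_finite.AE_pair_iff[OF psf_N mQ] by simp
  next
    case True
    then have "snd \<theta> \<noteq> snd \<theta>'" using ne unfolding c_def by (metis prod.expand right_minus_eq)
    then have "M \<noteq> 0" unfolding M_def using mat_log_inj[OF sp] by auto
    then have "AE A in (unif_sym_sphere :: (real^'n^'n) measure). trace (A ** M) \<noteq> 0"
      using AE_unif_sym_hyper Msym by blast
    then have qv: "AE A in (unif_sym_sphere :: (real^'n^'n) measure). Q v A" for v
      by eventually_elim (simp add: Q_def trace_mul_sym[OF Msym])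
    then have "AE v in (unif_sphere :: (real^'n) measure). AE A in (unif_sym_sphere :: (real^'n^'n) measure). Q v A"
      by (rule AE_I2)
    then show ?thesis using pair_sigma_finite.AE_pair_iff[OF psf_N mQ] by simp
  qed
  have inner: "AE w in (unif_sphere :: (real^2) measure). P w va" if q: "Q (fst va) (snd va)" for va
  proof -
    have "vector [c \<bullet> fst va, snd va \<bullet> M] \<noteq> (0 :: real^2)"
      using q unfolding Q_def by (metis vector_2 zero_index)
    then have "AE w in (unif_sphere :: (real^2) measure). w \<bullet> vector [c \<bullet> fst va, snd va \<bullet> M] \<noteq> 0"
      by (rule AE_unif_sphere_hyper)
    then show ?thesis by eventually_elim (simp add: P_def inner2)
  qed
  have aeP: "AE va in ?N. AE w in (unif_sphere :: (real^2) measure). P w va"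
    using aeQ by eventually_elim (rule inner)
  have mP: "{x \<in> space ((unif_sphere :: (real^2) measure) \<Otimes>\<^sub>M ?N). P (fst x) (snd x)} \<in> sets ((unif_sphere :: (real^2) measure) \<Otimes>\<^sub>M ?N)"
  proof -
    have "open {x :: (real^2) \<times> (real^'n) \<times> (real^'n^'n). P (fst x) (snd x)}"
      unfolding P_def by (intro open_Collect_neq continuous_intros)
    then show ?thesis unfolding UM_def[symmetric] space_UM sets_UM by (simp add: borel_open)
  qed
  have "AE w in (unif_sphere :: (real^2) measure). AE va in ?N. P w va"
    using aeP pair_sigma_finite.AE_commute[OF psf_UM mP] by simp
  then have "AE x in (unif_sphere :: (real^2) measure) \<Otimes>\<^sub>M ?N. P (fst x) (snd x)"
    using pair_sigma_finite.AE_pair_iff[OF psf_UM mP] by simp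
  then have "AE u in ?U. P (fst u) (snd u)" unfolding UM_def .
  then show ?thesis
  proof eventually_elim
    fix u :: "(real^2) \<times> (real^'n) \<times> (real^'n^'n)" assume "P (fst u) (snd u)"
    then have "pr u \<theta> - pr u \<theta>' \<noteq> 0" unfolding diff P_def .
    then show "pr u \<theta> \<noteq> pr u \<theta>'" by simp
  qed
qed

lemma swap_borel: "(prod.swap :: real \<times> real \<Rightarrow> _) \<in> borel_measurable borel"
  by (intro borel_measurable_continuous_onI continuous_intros)

lemma W_sym_le: "wasserstein_pp p \<beta> \<alpha> \<le> wasserstein_pp p \<alpha> \<beta>"
  unfolding wasserstein_pp_def
proof (rule INF_greatest)
  fix \<pi> assume pi: "\<pi> \<in> couplings \<alpha> \<beta>"
  have sp: "sets \<pi> = sets borel" and ps: "prob_space \<pi>" and pa: "distr \<pi> borel fst = \<alpha>"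
    and pb: "distr \<pi> borel snd = \<beta>" using pi unfolding couplings_def by auto
  have ms: "prod.swap \<in> measurable \<pi> borel" using meas_pi[OF sp swap_borel] .
  have mf: "fst \<in> measurable (borel :: (real \<times> real) measure) borel" by (rule fst_borel)
  have msn: "snd \<in> measurable (borel :: (real \<times> real) measure) borel" by (rule snd_borel)
  define \<pi>' where "\<pi>' = distr \<pi> borel prod.swap"
  have "\<pi>' \<in> couplings \<beta> \<alpha>" unfolding couplings_def
  proof (intro CollectI conjI)
    show "prob_space \<pi>'" unfolding \<pi>'_def by (rule prob_space.prob_space_distr[OF ps ms])
    show "sets \<pi>' = sets borel" unfolding \<pi>'_def by simp
    show "distr \<pi>' borel fst = \<beta>" unfolding \<pi>'_def using ms mf
      by (subst distr_distr) (auto simp: comp_def pb[symmetric])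
    show "distr \<pi>' borel snd = \<alpha>" unfolding \<pi>'_def using ms msn
      by (subst distr_distr) (auto simp: comp_def pa[symmetric])
  qed
  moreover have "(\<integral>\<^sup>+ z. ennreal (\<bar>fst z - snd z\<bar> powr p) \<partial>\<pi>') = (\<integral>\<^sup>+ z. ennreal (\<bar>fst z - snd z\<bar> powr p) \<partial>\<pi>)"
    unfolding \<pi>'_def using ms by (subst nn_integral_distr) (auto simp: abs_minus_commute)
  ultimately show "(INF \<pi>\<in>couplings \<beta> \<alpha>. \<integral>\<^sup>+ z. ennreal (\<bar>fst z - snd z\<bar> powr p) \<partial>\<pi>) \<le> (\<integral>\<^sup>+ z. ennreal (\<bar>fst z - snd z\<bar> powr p) \<partial>\<pi>)"
    by (metis (no_types, lifting) INF_lower)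
qed

lemma W_sym: "wasserstein_pp p \<alpha> \<beta> = wasserstein_pp p \<beta> \<alpha>"
  by (intro antisym W_sym_le)

lemma mix_sw_sym: "mix_sw p G1 G2 = mix_sw p G2 G1"
  unfolding mix_sw_def mix_sw_pp_def by (subst W_sym) simp

lemma mix_eq:
  assumes "finite (set_pmf G1)" "finite (set_pmf G2)"
  shows "mix_sw_pp p G1 G2 = (\<integral>\<^sup>+ u. Wl p (pr u) G1 G2 \<partial>(UM :: ((real^2) \<times> (real^'n) \<times> (real^'n^'n)) measure))"
  unfolding mix_sw_pp_def UM_def push_def pr_def
  by (intro nn_integral_cong W_eq_Wl assms)

lemma Wl_meas_UM:
  assumes "p > 0" "finite (set_pmf G1)" "finite (set_pmf G2)"
  shows "(\<lambda>u. Wl p (pr u) G1 G2) \<in> borel_measurable (UM :: ((real^2) \<times> (real^'n) \<times> (real^'n^'n)) measure)"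
  by (rule Wl_meas[OF pr_cont assms sets_UM])

lemma pr_bound:
  fixes \<theta> :: "(real^'n) \<times> (real^'n^'n)"
  assumes "spd (snd \<theta>)" "norm (fst u) \<le> 1" "norm (fst (snd u)) \<le> 1" "norm (snd (snd u)) \<le> 1"
  shows "\<bar>pr u \<theta>\<bar> \<le> norm (fst \<theta>) + norm (mat_log (snd \<theta>))"
proof -
  let ?w = "fst u" and ?v = "fst (snd u)" and ?A = "snd (snd u)" and ?L = "mat_log (snd \<theta>)"
  have tr: "trace (?A ** ?L) = ?A \<bullet> ?L" by (rule trace_mul_sym[OF mat_log_sym[OF assms(1)]])
  have "\<bar>pr u \<theta>\<bar> \<le> \<bar>?w $ 1\<bar> * \<bar>fst \<theta> \<bullet> ?v\<bar> + \<bar>?w $ 2\<bar> * \<bar>?A \<bullet> ?L\<bar>"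
    unfolding pr_def proj_V_def tr by (simp add: abs_mult[symmetric] abs_triangle_ineq)
  also have "\<dots> \<le> 1 * (norm (fst \<theta>) * 1) + 1 * (1 * norm ?L)"
  proof (intro add_mono mult_mono)
    show "\<bar>?w $ 1\<bar> \<le> 1" "\<bar>?w $ 2\<bar> \<le> 1" using component_le_norm_cart[of ?w] assms order_trans by blast+
    have "\<bar>fst \<theta> \<bullet> ?v\<bar> \<le> norm (fst \<theta>) * norm ?v" by (rule Cauchy_Schwarz_ineq2)
    also have "\<dots> \<le> norm (fst \<theta>) * 1" using assms by (intro mult_left_mono) auto
    finally show "\<bar>fst \<theta> \<bullet> ?v\<bar> \<le> norm (fst \<theta>) * 1" .
    have "\<bar>?A \<bullet> ?L\<bar> \<le> norm ?A * norm ?L" by (rule Cauchy_Schwarz_ineq2)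
    also have "\<dots> \<le> 1 * norm ?L" using assms by (intro mult_right_mono) auto
    finally show "\<bar>?A \<bullet> ?L\<bar> \<le> 1 * norm ?L" .
  qed auto
  finally show ?thesis by simp
qed

lemma mix_fin:
  fixes G1 G2 :: "((real^'n) \<times> (real^'n^'n)) pmf"
  assumes p: "p > 0" and m1: "mixing_measure G1" and m2: "mixing_measure G2"
  shows "mix_sw_pp p G1 G2 < \<infinity>"
proof -
  define S where "S = set_pmf G1 \<union> set_pmf G2"
  define R where "R = (\<Sum>\<theta>\<in>S. norm (fst \<theta>) + norm (mat_log (snd \<theta>)))"
  have fin: "finite (set_pmf G1)" "finite (set_pmf G2)" using m1 m2 unfolding mixing_measure_def by auto
  have finS: "finite S" unfolding S_def using fin by auto
  have spdS: "spd (snd \<theta>)" if "\<theta> \<in> S" for \<theta> using that m1 m2 unfolding S_def mixing_measure_def by auto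
  have ae: "AE u in (UM :: ((real^2) \<times> (real^'n) \<times> (real^'n^'n)) measure). Wl p (pr u) G1 G2 \<le> ennreal ((2 * R) powr p)"
    using AE_UM_norms
  proof eventually_elim
    fix u :: "(real^2) \<times> (real^'n) \<times> (real^'n^'n)"
    assume n: "norm (fst u) \<le> 1 \<and> norm (fst (snd u)) \<le> 1 \<and> norm (snd (snd u)) \<le> 1"
    show "Wl p (pr u) G1 G2 \<le> ennreal ((2 * R) powr p)"
    proof (rule Wl_bound[OF p])
      fix \<theta> assume th: "\<theta> \<in> set_pmf G1 \<union> set_pmf G2"
      then have "\<bar>pr u \<theta>\<bar> \<le> norm (fst \<theta>) + norm (mat_log (snd \<theta>))"
        using n spdS unfolding S_def by (intro pr_bound) auto
      also have "\<dots> \<le> R" unfolding R_def using th finS unfolding S_def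
        by (intro member_le_sum) auto
      finally show "\<bar>pr u \<theta>\<bar> \<le> R" .
    qed
  qed
  have "mix_sw_pp p G1 G2 \<le> (\<integral>\<^sup>+ u. ennreal ((2 * R) powr p) \<partial>(UM :: ((real^2) \<times> (real^'n) \<times> (real^'n^'n)) measure))"
    unfolding mix_eq[OF fin] by (rule nn_integral_mono_AE[OF ae])
  also have "\<dots> = ennreal ((2 * R) powr p)"
  proof -
    have "emeasure (UM :: ((real^2) \<times> (real^'n) \<times> (real^'n^'n)) measure) (space UM) = 1"
      by (rule prob_space.emeasure_space_1[OF prob_UM])
    then show ?thesis by simp
  qed
  also have "\<dots> < \<infinity>" by simp
  finally show ?thesis .
qed

lemma mix_zero_self:
  fixes G :: "((real^'n) \<times> (real^'n^'n)) pmf"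
  assumes p: "p \<ge> 1" and m: "mixing_measure G"
  shows "mix_sw p G G = 0"
proof -
  have fin: "finite (set_pmf G)" using m unfolding mixing_measure_def by auto
  have "mix_sw_pp p G G = 0" unfolding mix_eq[OF fin fin] using p by (simp add: Wl_diag)
  then show ?thesis unfolding mix_sw_def by simp
qed

lemma mix_pos:
  fixes G1 G2 :: "((real^'n) \<times> (real^'n^'n)) pmf"
  assumes p: "p \<ge> 1" and m1: "mixing_measure G1" and m2: "mixing_measure G2"
    and z: "mix_sw p G1 G2 = 0"
  shows "G1 = G2"
proof -
  let ?U = "(UM :: ((real^2) \<times> (real^'n) \<times> (real^'n^'n)) measure)"
  have p0: "p > 0" using p by simp
  have fin: "finite (set_pmf G1)" "finite (set_pmf G2)" using m1 m2 unfolding mixing_measure_def by auto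
  define S where "S = set_pmf G1 \<union> set_pmf G2"
  have finS: "finite S" unfolding S_def using fin by auto
  have spdS: "spd (snd \<theta>)" if "\<theta> \<in> S" for \<theta> using that m1 m2 unfolding S_def mixing_measure_def by auto
  have fI: "mix_sw_pp p G1 G2 < \<infinity>" by (rule mix_fin[OF p0 m1 m2])
  have "enn2real (mix_sw_pp p G1 G2) = 0" using z unfolding mix_sw_def by (simp add: powr_eq_0_iff)
  then have "mix_sw_pp p G1 G2 = 0" using fI by (auto simp: enn2real_eq_0_iff)
  then have "(\<integral>\<^sup>+ u. Wl p (pr u) G1 G2 \<partial>?U) = 0" unfolding mix_eq[OF fin] .
  then have ae0: "AE u in ?U. Wl p (pr u) G1 G2 = 0"
    using Wl_meas_UM[OF p0 fin] by (simp add: nn_integral_0_iff_AE)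
  have aeS: "AE u in ?U. \<forall>\<theta>\<in>S. \<forall>\<theta>'\<in>S. \<theta> \<noteq> \<theta>' \<longrightarrow> pr u \<theta> \<noteq> pr u \<theta>'"
  proof (intro AE_finite_allI finS)
    fix \<theta> \<theta>' assume "\<theta> \<in> S" "\<theta>' \<in> S"
    then show "AE u in ?U. \<theta> \<noteq> \<theta>' \<longrightarrow> pr u \<theta> \<noteq> pr u \<theta>'"
      using AE_sep[OF spdS spdS] by (cases "\<theta> = \<theta>'") auto
  qed
  define P where "P u = (Wl p (pr u) G1 G2 = 0 \<and> (\<forall>\<theta>\<in>S. \<forall>\<theta>'\<in>S. \<theta> \<noteq> \<theta>' \<longrightarrow> pr u \<theta> \<noteq> pr u \<theta>'))" for u
  have aeP: "AE u in ?U. P u"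
    using ae0 aeS unfolding P_def by (rule eventually_conj)
  have "\<exists>u. P u"
  proof (rule ccontr)
    assume "\<nexists>u. P u"
    then have "AE u in ?U. False" using aeP by (rule_tac eventually_mono) auto
    then show False using prob_space.AE_False[OF prob_UM] by blast
  qed
  then obtain u where "P u" by blast
  then have u: "Wl p (pr u) G1 G2 = 0" "\<forall>\<theta>\<in>S. \<forall>\<theta>'\<in>S. \<theta> \<noteq> \<theta>' \<longrightarrow> pr u \<theta> \<noteq> pr u \<theta>'"
    unfolding P_def by auto
  have "inj_on (pr u) S" using u(2) unfolding inj_on_def by blast
  then show ?thesis unfolding S_def by (rule Wl_zero[OF p0 fin _ u(1)])
qed

lemma mix_tri:
  fixes G1 G2 G3 :: "((real^'n) \<times> (real^'n^'n)) pmf"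
  assumes p: "p \<ge> 1" and m1: "mixing_measure G1" and m2: "mixing_measure G2" and m3: "mixing_measure G3"
  shows "mix_sw p G1 G3 \<le> mix_sw p G1 G2 + mix_sw p G2 G3"
proof -
  let ?U = "(UM :: ((real^2) \<times> (real^'n) \<times> (real^'n^'n)) measure)"
  have p0: "p > 0" using p by simp
  have fin: "finite (set_pmf G1)" "finite (set_pmf G2)" "finite (set_pmf G3)"
    using m1 m2 m3 unfolding mixing_measure_def by auto
  define f12 where "f12 u = enn2real (Wl p (pr u) G1 G2)" for u
  define f23 where "f23 u = enn2real (Wl p (pr u) G2 G3)" for u
  define f13 where "f13 u = enn2real (Wl p (pr u) G1 G3)" for u
  have e12: "Wl p (pr u) G1 G2 = ennreal (f12 u)" for u
    unfolding f12_def using Wl_fin[OF fin(1,2)] by (simp add: less_top ennreal_enn2real_if)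
  have e23: "Wl p (pr u) G2 G3 = ennreal (f23 u)" for u
    unfolding f23_def using Wl_fin[OF fin(2,3)] by (simp add: less_top ennreal_enn2real_if)
  have e13: "Wl p (pr u) G1 G3 = ennreal (f13 u)" for u
    unfolding f13_def using Wl_fin[OF fin(1,3)] by (simp add: less_top ennreal_enn2real_if)
  define F where "F u = f12 u powr (1/p)" for u
  define H where "H u = f23 u powr (1/p)" for u
  have f0: "f12 u \<ge> 0" "f23 u \<ge> 0" "f13 u \<ge> 0" for u unfolding f12_def f23_def f13_def by auto
  have Fp: "F u powr p = f12 u" "H u powr p = f23 u" for u
    unfolding F_def H_def using f0 p by (auto simp: powr_powr)
  have mF: "F \<in> borel_measurable ?U" "H \<in> borel_measurable ?U"
  proof -
    have "(\<lambda>u. enn2real (Wl p (pr u) G1 G2)) \<in> borel_measurable ?U"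
      using Wl_meas_UM[OF p0 fin(1,2)] by measurable
    then show "F \<in> borel_measurable ?U" unfolding F_def f12_def by measurable
    have "(\<lambda>u. enn2real (Wl p (pr u) G2 G3)) \<in> borel_measurable ?U"
      using Wl_meas_UM[OF p0 fin(2,3)] by measurable
    then show "H \<in> borel_measurable ?U" unfolding H_def f23_def by measurable
  qed
  have I12: "mix_sw_pp p G1 G2 = (\<integral>\<^sup>+ u. ennreal (F u powr p) \<partial>?U)"
    unfolding mix_eq[OF fin(1,2)] Fp e12 ..
  have I23: "mix_sw_pp p G2 G3 = (\<integral>\<^sup>+ u. ennreal (H u powr p) \<partial>?U)"
    unfolding mix_eq[OF fin(2,3)] Fp e23 ..
  have pt: "f13 u \<le> (F u + H u) powr p" for u
  proof -
    have "f13 u powr (1/p) \<le> F u + H u"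
      unfolding f13_def F_def H_def f12_def f23_def by (rule Wl_tri[OF p fin])
    then have "(f13 u powr (1/p)) powr p \<le> (F u + H u) powr p"
      using p by (intro powr_mono2) auto
    then show ?thesis using f0 p by (simp add: powr_powr)
  qed
  have "mix_sw_pp p G1 G3 \<le> (\<integral>\<^sup>+ u. ennreal ((F u + H u) powr p) \<partial>?U)"
    unfolding mix_eq[OF fin(1,3)] e13 by (intro nn_integral_mono ennreal_leI pt)
  also have "\<dots> \<le> ennreal ((enn2real (\<integral>\<^sup>+ u. ennreal (F u powr p) \<partial>?U) powr (1/p) +
      enn2real (\<integral>\<^sup>+ u. ennreal (H u powr p) \<partial>?U) powr (1/p)) powr p)"
  proof (rule minkowski_nn[OF p mF])
    show "(\<integral>\<^sup>+ u. ennreal (F u powr p) \<partial>?U) < \<infinity>" unfolding I12[symmetric] by (rule mix_fin[OF p0 m1 m2])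
    show "(\<integral>\<^sup>+ u. ennreal (H u powr p) \<partial>?U) < \<infinity>" unfolding I23[symmetric] by (rule mix_fin[OF p0 m2 m3])
  qed (auto simp: F_def H_def)
  finally have le: "mix_sw_pp p G1 G3 \<le> ennreal ((enn2real (mix_sw_pp p G1 G2) powr (1/p) +
      enn2real (mix_sw_pp p G2 G3) powr (1/p)) powr p)" unfolding I12 I23 .
  define a where "a = enn2real (mix_sw_pp p G1 G2) powr (1/p) + enn2real (mix_sw_pp p G2 G3) powr (1/p)"
  have a0: "a \<ge> 0" unfolding a_def by auto
  have "enn2real (mix_sw_pp p G1 G3) \<le> a powr p" using le unfolding a_def[symmetric]
    by (intro enn2real_leI) auto
  then have "enn2real (mix_sw_pp p G1 G3) powr (1/p) \<le> (a powr p) powr (1/p)"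
    using p by (intro powr_mono2) auto
  also have "\<dots> = a" using a0 p by (simp add: powr_powr)
  finally show ?thesis unfolding mix_sw_def a_def .
qed

theorem corollary1:
  fixes p :: real
  assumes "p \<ge> 1"
  shows "\<exists>D :: (real^'n) measure \<Rightarrow> (real^'n) measure \<Rightarrow> real.
           (\<forall>G1 G2. mixing_measure G1 \<longrightarrow> mixing_measure G2 \<longrightarrow>
              D (gmm G1) (gmm G2) = mix_sw p G1 G2) \<and>
           Metric_space (gmm ` {G. mixing_measure G}) D"
proof -
  define MM where "MM = {G :: ((real^'n) \<times> (real^'n^'n)) pmf. mixing_measure G}"
  define D where "D x y = mix_sw p (inv_into MM gmm x) (inv_into MM gmm y)" for x y :: "(real^'n) measure"
  have inj: "inj_on gmm MM" unfolding MM_def inj_on_def using gmm_inj by blast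
  have inv: "inv_into MM gmm (gmm G) = G" if "mixing_measure G" for G
    using inv_into_f_f[OF inj] that unfolding MM_def by blast
  have eq: "D (gmm G1) (gmm G2) = mix_sw p G1 G2" if "mixing_measure G1" "mixing_measure G2" for G1 G2
    unfolding D_def using inv that by simp
  have "Metric_space (gmm ` MM) D"
  proof
    show "0 \<le> D x y" for x y unfolding D_def mix_sw_def by simp
    show "D x y = D y x" for x y unfolding D_def by (rule mix_sw_sym)
    show "D x y = 0 \<longleftrightarrow> x = y" if "x \<in> gmm ` MM" "y \<in> gmm ` MM" for x y
    proof -
      from that(1) obtain G1 where G1: "G1 \<in> MM" "x = gmm G1" by blast
      from that(2) obtain G2 where G2: "G2 \<in> MM" "y = gmm G2" by blast
      have G: "mixing_measure G1" "mixing_measure G2" "x = gmm G1" "y = gmm G2"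
        using G1 G2 unfolding MM_def by auto
      show ?thesis
      proof
        assume "D x y = 0"
        then have "mix_sw p G1 G2 = 0" using eq G by simp
        then have "G1 = G2" by (rule mix_pos[OF assms G(1,2)])
        then show "x = y" using G by simp
      next
        assume "x = y"
        then have "G1 = G2" using G inj unfolding MM_def inj_on_def by auto
        then show "D x y = 0" using eq G mix_zero_self[OF assms G(1)] by simp
      qed
    qed
    show "D x z \<le> D x y + D y z" if "x \<in> gmm ` MM" "y \<in> gmm ` MM" "z \<in> gmm ` MM" for x y z
    proof -
      from that(1) obtain G1 where G1: "G1 \<in> MM" "x = gmm G1" by blast
      from that(2) obtain G2 where G2: "G2 \<in> MM" "y = gmm G2" by blast
      from that(3) obtain G3 where G3: "G3 \<in> MM" "z = gmm G3" by blast
      have G: "mixing_measure G1" "mixing_measure G2" "mixing_measure G3"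
        "x = gmm G1" "y = gmm G2" "z = gmm G3"
        using G1 G2 G3 unfolding MM_def by auto
      show ?thesis using eq G mix_tri[OF assms G(1,2,3)] by simp
    qed
  qed
  then show ?thesis using eq unfolding MM_def by blast
qed

end
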